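(* Let $(M,g)$ be a (CQR)$_n$ pseudo-Riemannian manifold with fundamental vector $A_i$. Then (1) $(\nabla_i A^m) C_{jklm} + (A^m A_m) C_{jkli} = 0$; (2) $(\nabla_i C_{jklm})(\nabla^i C^{jklm}) = 8 (A_iA^i)(C_{jklm}C^{jklm})$; (3) the tensor $\nabla_iA_m$ is Weyl compatible: $(\nabla_i A_m) C_{jkl}{}^m + (\nabla_j A_m) C_{kil}{}^m + (\nabla_k A_m) C_{ijl}{}^m = 0$.
   Context: $(M,g)$ is a connected Hausdorff pseudo-Riemannian manifold of dimension $n\ge 3$ with Levi-Civita connection $\nabla$; indices are raised/lowered with $g$ and repeated indices summed. $R_{jklm}$ is the Riemann tensor, $R_{kl}=-R_{mkl}{}^m$, $R=R^m{}_m$, and the Weyl tensor is $$C_{jklm}=R_{jklm}+\tfrac{1}{n-2}\big(g_{mj}R_{kl}-g_{mk}R_{jl}+R_{mj}g_{kl}-R_{mk}g_{jl}\big)-\tfrac{R}{(n-1)(n-2)}\big(g_{mj}g_{kl}-g_{mk}g_{jl}\big).$$ The manifold is (CQR)$_n$ (conformally quasi-recurrent) if $C_{jklm}\not\equiv 0$ and there is a non-zero vector field $A_i$ (fundamental vector) with $$\nabla_i C_{jklm}=2A_iC_{jklm}+A_jC_{iklm}+A_kC_{jilm}+A_lC_{jkim}+A_mC_{jkli}.$$ *)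

theory Defs
  imports "HOL-Analysis.Analysis"
begin

text \<open>Local-coordinate setting: the manifold is modelled by an open connected
  set U of coordinates in real^'n (dimension n = CARD('n)).\<close>

definition pd :: "'n::finite \<Rightarrow> (real^'n \<Rightarrow> real) \<Rightarrow> real^'n \<Rightarrow> real" where
  "pd i f x = frechet_derivative f (at x) (axis i 1)"

text \<open>C-infinity on U: all iterated partial derivatives exist and are differentiable on U.\<close>
definition smooth_on :: "(real^'n::finite) set \<Rightarrow> (real^'n \<Rightarrow> real) \<Rightarrow> bool" where
  "smooth_on U f \<longleftrightarrow> (\<exists>S. f \<in> S \<and> (\<forall>h\<in>S. h differentiable_on U \<and> (\<forall>i. pd i h \<in> S)))"

type_synonym 'n metric = "real^'n \<Rightarrow> real^'n^'n"

definition pseudo_riemannian :: "(real^'n::finite) set \<Rightarrow> 'n metric \<Rightarrow> bool" where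
  "pseudo_riemannian U g \<longleftrightarrow>
     (\<forall>i j. smooth_on U (\<lambda>x. g x $ i $ j)) \<and>
     (\<forall>x\<in>U. transpose (g x) = g x \<and> det (g x) \<noteq> 0)"

definition ginv :: "'n::finite metric \<Rightarrow> real^'n \<Rightarrow> 'n \<Rightarrow> 'n \<Rightarrow> real" where
  "ginv g x i j = matrix_inv (g x) $ i $ j"

definition christ :: "'n::finite metric \<Rightarrow> 'n \<Rightarrow> 'n \<Rightarrow> 'n \<Rightarrow> real^'n \<Rightarrow> real" where
  "christ g m i j x = (1/2) * (\<Sum>p\<in>UNIV. ginv g x m p *
      (pd i (\<lambda>y. g y $ p $ j) x + pd j (\<lambda>y. g y $ p $ i) x - pd p (\<lambda>y. g y $ i $ j) x))"

definition riem_up :: "'n::finite metric \<Rightarrow> 'n \<Rightarrow> 'n \<Rightarrow> 'n \<Rightarrow> 'n \<Rightarrow> real^'n \<Rightarrow> real" where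
  "riem_up g e k l m x =
     pd l (christ g e k m) x - pd m (christ g e k l) x
     + (\<Sum>p\<in>UNIV. christ g e p l x * christ g p k m x - christ g e p m x * christ g p k l x)"

definition riem :: "'n::finite metric \<Rightarrow> 'n \<Rightarrow> 'n \<Rightarrow> 'n \<Rightarrow> 'n \<Rightarrow> real^'n \<Rightarrow> real" where
  "riem g j k l m x = (\<Sum>e\<in>UNIV. g x $ j $ e * riem_up g e k l m x)"

definition ricci :: "'n::finite metric \<Rightarrow> 'n \<Rightarrow> 'n \<Rightarrow> real^'n \<Rightarrow> real" where
  "ricci g k l x = - (\<Sum>m\<in>UNIV. \<Sum>p\<in>UNIV. ginv g x m p * riem g m k l p x)"

definition scal :: "'n::finite metric \<Rightarrow> real^'n \<Rightarrow> real" where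
  "scal g x = (\<Sum>m\<in>UNIV. \<Sum>p\<in>UNIV. ginv g x m p * ricci g m p x)"

definition weyl :: "'n::finite metric \<Rightarrow> 'n \<Rightarrow> 'n \<Rightarrow> 'n \<Rightarrow> 'n \<Rightarrow> real^'n \<Rightarrow> real" where
  "weyl g j k l m x =
     (let n = real CARD('n) in
      riem g j k l m x
      + (1 / (n - 2)) * (g x $ m $ j * ricci g k l x - g x $ m $ k * ricci g j l x
                         + ricci g m j x * g x $ k $ l - ricci g m k x * g x $ j $ l)
      - scal g x / ((n - 1) * (n - 2)) * (g x $ m $ j * g x $ k $ l - g x $ m $ k * g x $ j $ l))"

definition nabla1 :: "'n::finite metric \<Rightarrow> (real^'n \<Rightarrow> 'n \<Rightarrow> real) \<Rightarrow> 'n \<Rightarrow> 'n \<Rightarrow> real^'n \<Rightarrow> real" where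
  "nabla1 g A i m x = pd i (\<lambda>y. A y m) x - (\<Sum>p\<in>UNIV. christ g p i m x * A x p)"

definition nabla4 :: "'n::finite metric \<Rightarrow> ('n \<Rightarrow> 'n \<Rightarrow> 'n \<Rightarrow> 'n \<Rightarrow> real^'n \<Rightarrow> real)
     \<Rightarrow> 'n \<Rightarrow> 'n \<Rightarrow> 'n \<Rightarrow> 'n \<Rightarrow> 'n \<Rightarrow> real^'n \<Rightarrow> real" where
  "nabla4 g T i j k l m x = pd i (T j k l m) x
     - (\<Sum>p\<in>UNIV. christ g p i j x * T p k l m x + christ g p i k x * T j p l m x
                 + christ g p i l x * T j k p m x + christ g p i m x * T j k l p x)"

text \<open>(CQR)_n with fundamental vector A (given as a covector field A_i).\<close>
definition CQR :: "(real^'n::finite) set \<Rightarrow> 'n metric \<Rightarrow> (real^'n \<Rightarrow> 'n \<Rightarrow> real) \<Rightarrow> bool" where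
  "CQR U g A \<longleftrightarrow>
     (\<exists>x\<in>U. \<exists>j k l m. weyl g j k l m x \<noteq> 0) \<and>
     (\<forall>i. smooth_on U (\<lambda>x. A x i)) \<and>
     (\<exists>x\<in>U. \<exists>i. A x i \<noteq> 0) \<and>
     (\<forall>x\<in>U. \<forall>i j k l m.
        nabla4 g (weyl g) i j k l m x =
          2 * A x i * weyl g j k l m x + A x j * weyl g i k l m x + A x k * weyl g j i l m x
          + A x l * weyl g j k i m x + A x m * weyl g j k l i x)"

end

theory Submission
  imports Defs
begin

lemma pd_has: "(f has_derivative f') (at x) \<Longrightarrow> pd i f x = f' (axis i 1)"
  unfolding pd_def by (metis frechet_derivative_at)

lemma pd_local:
  assumes "open U" "x \<in> U" "\<And>y. y \<in> U \<Longrightarrow> f y = h y"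
  shows "pd i f x = pd i h x"
proof -
  have "\<And>f'. (f has_derivative f') (at x) \<longleftrightarrow> (h has_derivative f') (at x)"
    using assms has_derivative_transform_within_open[of _ _ x UNIV U] by metis
  then have "frechet_derivative f (at x) = frechet_derivative h (at x)"
    unfolding frechet_derivative_def by simp
  then show ?thesis unfolding pd_def by simp
qed

lemma dwork: "f differentiable (at x) \<Longrightarrow> (f has_derivative frechet_derivative f (at x)) (at x)"
  using frechet_derivative_works by blast

lemma pd_add:
  "f differentiable (at x) \<Longrightarrow> h differentiable (at x) \<Longrightarrow>
   pd i (\<lambda>y. f y + h y) x = pd i f x + pd i h x"
  by (rule trans[OF pd_has[OF has_derivative_add[OF dwork dwork]]]) (simp_all add: pd_def)

lemma pd_diff:
  "f differentiable (at x) \<Longrightarrow> h differentiable (at x) \<Longrightarrow>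
   pd i (\<lambda>y. f y - h y) x = pd i f x - pd i h x"
  by (rule trans[OF pd_has[OF has_derivative_diff[OF dwork dwork]]]) (simp_all add: pd_def)

lemma pd_mult:
  fixes f h :: "real^'n::finite \<Rightarrow> real"
  shows "f differentiable (at x) \<Longrightarrow> h differentiable (at x) \<Longrightarrow>
   pd i (\<lambda>y. f y * h y) x = pd i f x * h x + f x * pd i h x"
  by (rule trans[OF pd_has[OF has_derivative_mult[OF dwork dwork]]]) (simp_all add: pd_def)

lemma pd_const: "pd i (\<lambda>y. c) x = 0"
  by (rule trans[OF pd_has[OF has_derivative_const]]) simp

lemma pd_cmult:
  fixes f :: "real^'n::finite \<Rightarrow> real"
  shows "f differentiable (at x) \<Longrightarrow> pd i (\<lambda>y. c * f y) x = c * pd i f x"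
  using pd_mult[of "\<lambda>y. c" x f i] by (simp add: pd_const)

lemma pd_sum:
  fixes f :: "'a \<Rightarrow> real^'n::finite \<Rightarrow> real"
  shows "finite S \<Longrightarrow> (\<And>p. p \<in> S \<Longrightarrow> f p differentiable (at x)) \<Longrightarrow>
   pd i (\<lambda>y. \<Sum>p\<in>S. f p y) x = (\<Sum>p\<in>S. pd i (f p) x)"
  by (rule trans[OF pd_has[OF has_derivative_sum[of S "\<lambda>p. f p" "\<lambda>p. frechet_derivative (f p) (at x)"]]])
     (simp_all add: pd_def dwork)

lemma pd_zero_on:
  assumes "open U" "x \<in> U" "\<And>y. y \<in> U \<Longrightarrow> f y = 0"
  shows "pd i f x = 0"
  using pd_local[OF assms(1,2), of f "\<lambda>y. 0"] assms(3) pd_const by simp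

inductive_set polyset :: "(real^'n::finite \<Rightarrow> real) set \<Rightarrow> (real^'n \<Rightarrow> real) set" for B where
  pb: "b \<in> B \<Longrightarrow> b \<in> polyset B"
| pc: "(\<lambda>y. c) \<in> polyset B"
| padd: "p \<in> polyset B \<Longrightarrow> q \<in> polyset B \<Longrightarrow> (\<lambda>y. p y + q y) \<in> polyset B"
| pmul: "p \<in> polyset B \<Longrightarrow> q \<in> polyset B \<Longrightarrow> (\<lambda>y. p y * q y) \<in> polyset B"

lemma polyset_mono:
  assumes "B \<subseteq> B'" "p \<in> polyset B" shows "p \<in> polyset B'"
  using assms(2) by (induction rule: polyset.induct) (use assms(1) in \<open>auto intro: polyset.intros\<close>)

lemma poly_sum:
  assumes "finite S" "\<And>p. p \<in> S \<Longrightarrow> f p \<in> polyset B"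
  shows "(\<lambda>y. \<Sum>p\<in>S. f p y) \<in> polyset B"
  using assms
proof (induction S rule: finite_induct)
  case empty then show ?case using pc[of 0 B] by simp
next
  case (insert a F)
  then show ?case using padd[of "f a" B "\<lambda>y. \<Sum>p\<in>F. f p y"] by simp
qed

lemma poly_prod:
  assumes "finite S" "\<And>p. p \<in> S \<Longrightarrow> f p \<in> polyset B"
  shows "(\<lambda>y. \<Prod>p\<in>S. f p y) \<in> polyset B"
  using assms
proof (induction S rule: finite_induct)
  case empty then show ?case using pc[of 1 B] by simp
next
  case (insert a F)
  then show ?case using pmul[of "f a" B "\<lambda>y. \<Prod>p\<in>F. f p y"] by simp
qed

lemma poly_det:
  fixes M :: "real^'n::finite \<Rightarrow> real^'m::finite^'m"
  assumes "\<And>i j. (\<lambda>y. M y $ i $ j) \<in> polyset B"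
  shows "(\<lambda>y. det (M y)) \<in> polyset B"
proof -
  have "(\<lambda>y. \<Sum>p\<in>{p. p permutes (UNIV::'m set)}. of_int (sign p) * (\<Prod>i\<in>UNIV. M y $ i $ p i)) \<in> polyset B"
    apply (rule poly_sum)
     apply (simp add: finite_permutations)
    apply (rule pmul[OF pc])
    apply (rule poly_prod)
    using assms by auto
  then show ?thesis unfolding det_def .
qed

definition pdc :: "(real^'n::finite) set \<Rightarrow> (real^'n \<Rightarrow> real) set \<Rightarrow> bool" where
  "pdc U B \<longleftrightarrow> (\<forall>b\<in>B. b differentiable_on U) \<and> (\<forall>b\<in>B. \<forall>i. \<exists>q\<in>polyset B. \<forall>x\<in>U. pd i b x = q x)"

lemma poly_diff_on:
  assumes "\<forall>b\<in>B. b differentiable_on U" "p \<in> polyset B"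
  shows "p differentiable_on U"
  using assms(2) by (induction rule: polyset.induct) (use assms(1) in auto)

lemma poly_pd:
  assumes "open U" "pdc U B" "p \<in> polyset B"
  shows "\<exists>q\<in>polyset B. \<forall>x\<in>U. pd i p x = q x"
  using assms(3)
proof (induction rule: polyset.induct)
  case (pb b)
  then show ?case using assms(2) unfolding pdc_def by blast
next
  case (pc c)
  show ?case by (rule bexI[of _ "\<lambda>y. 0"]) (simp_all add: pd_const polyset.pc)
next
  case (padd p q)
  then obtain p' q' where p': "p' \<in> polyset B" "\<forall>x\<in>U. pd i p x = p' x"
    and q': "q' \<in> polyset B" "\<forall>x\<in>U. pd i q x = q' x" by blast
  have dp: "\<forall>x\<in>U. p differentiable at x" and dq: "\<forall>x\<in>U. q differentiable at x"
    using poly_diff_on[of B U] padd.hyps assms(1,2) differentiable_on_eq_differentiable_at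
    unfolding pdc_def by blast+
  show ?case
    apply (rule bexI[of _ "\<lambda>y. p' y + q' y"])
    using dp dq p' q' apply (auto simp add: pd_add)[1]
    using p' q' polyset.padd by blast
next
  case (pmul p q)
  then obtain p' q' where p': "p' \<in> polyset B" "\<forall>x\<in>U. pd i p x = p' x"
    and q': "q' \<in> polyset B" "\<forall>x\<in>U. pd i q x = q' x" by blast
  have dp: "\<forall>x\<in>U. p differentiable at x" and dq: "\<forall>x\<in>U. q differentiable at x"
    using poly_diff_on[of B U] pmul.hyps assms(1,2) differentiable_on_eq_differentiable_at
    unfolding pdc_def by blast+
  show ?case
    apply (rule bexI[of _ "\<lambda>y. p' y * q y + p y * q' y"])
    using dp dq p' q' apply (auto simp add: pd_mult)[1]
    using p' q' pmul.hyps polyset.padd polyset.pmul by blast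
qed

lemma smooth_from_poly:
  assumes "open U" "pdc U B" "p \<in> polyset B" "\<And>x. x \<in> U \<Longrightarrow> h x = p x"
  shows "smooth_on U h"
proof -
  define S where "S = {h. \<exists>p\<in>polyset B. \<forall>x\<in>U. h x = p x}"
  have "\<forall>h\<in>S. h differentiable_on U \<and> (\<forall>i. pd i h \<in> S)"
  proof
    fix h assume "h \<in> S"
    then obtain p where p: "p \<in> polyset B" "\<forall>x\<in>U. h x = p x" unfolding S_def by blast
    have dp: "p differentiable_on U" using poly_diff_on p(1) assms(2) unfolding pdc_def by blast
    have "h differentiable_on U"
      unfolding differentiable_on_eq_differentiable_at[OF assms(1)]
    proof
      fix x assume x: "x \<in> U"
      then have "p differentiable at x" using dp differentiable_on_eq_differentiable_at[OF assms(1)] by blast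
      then show "h differentiable at x"
        using x p(2) assms(1) unfolding differentiable_def
        using has_derivative_transform_within_open[of p _ x UNIV U h] by auto
    qed
    moreover have "pd i h \<in> S" for i
    proof -
      obtain q where q: "q \<in> polyset B" "\<forall>x\<in>U. pd i p x = q x" using poly_pd[OF assms(1,2) p(1)] by blast
      have "\<forall>x\<in>U. pd i h x = q x" using pd_local[OF assms(1), of _ h p] p(2) q(2) by simp
      then show ?thesis using q(1) unfolding S_def by blast
    qed
    ultimately show "h differentiable_on U \<and> (\<forall>i. pd i h \<in> S)" by blast
  qed
  moreover have "h \<in> S" using assms(3,4) unfolding S_def by blast
  ultimately show ?thesis unfolding smooth_on_def by blast
qed

lemma smooth_pdc:
  assumes "smooth_on U f"
  shows "\<exists>S. f \<in> S \<and> pdc U S"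
proof -
  obtain S where S: "f \<in> S" "\<forall>h\<in>S. h differentiable_on U \<and> (\<forall>i. pd i h \<in> S)"
    using assms unfolding smooth_on_def by blast
  have "pdc U S" unfolding pdc_def using S(2) pb by blast
  then show ?thesis using S(1) by blast
qed

lemma pdc_Un: "pdc U B1 \<Longrightarrow> pdc U B2 \<Longrightarrow> pdc U (B1 \<union> B2)"
proof -
  assume a: "pdc U B1" "pdc U B2"
  have m1: "\<And>p. p \<in> polyset B1 \<Longrightarrow> p \<in> polyset (B1 \<union> B2)" by (rule polyset_mono) auto
  have m2: "\<And>p. p \<in> polyset B2 \<Longrightarrow> p \<in> polyset (B1 \<union> B2)" by (rule polyset_mono) auto
  show ?thesis unfolding pdc_def
  proof (intro conjI ballI allI)
    fix b assume "b \<in> B1 \<union> B2"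
    then show "b differentiable_on U" using a unfolding pdc_def by blast
  next
    fix b i assume b: "b \<in> B1 \<union> B2"
    show "\<exists>q\<in>polyset (B1 \<union> B2). \<forall>x\<in>U. pd i b x = q x"
    proof (cases "b \<in> B1")
      case True
      then obtain q where "q \<in> polyset B1" "\<forall>x\<in>U. pd i b x = q x" using a(1) unfolding pdc_def by blast
      then show ?thesis using m1 by blast
    next
      case False
      then have "b \<in> B2" using b by blast
      then obtain q where "q \<in> polyset B2" "\<forall>x\<in>U. pd i b x = q x" using a(2) unfolding pdc_def by blast
      then show ?thesis using m2 by blast
    qed
  qed
qed


lemma sm_binop:
  assumes U: "open U" and f: "smooth_on U f" and h: "smooth_on U h"
  shows sm_add: "smooth_on U (\<lambda>y. f y + h y)"
    and sm_mult: "smooth_on U (\<lambda>y. f y * h y)"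
proof -
  obtain S1 where S1: "f \<in> S1" "pdc U S1" using smooth_pdc[OF f] by blast
  obtain S2 where S2: "h \<in> S2" "pdc U S2" using smooth_pdc[OF h] by blast
  have P: "pdc U (S1 \<union> S2)" using pdc_Un S1 S2 by blast
  have f': "f \<in> polyset (S1 \<union> S2)" and h': "h \<in> polyset (S1 \<union> S2)" using S1 S2 pb by blast+
  show "smooth_on U (\<lambda>y. f y + h y)" by (rule smooth_from_poly[OF U P padd[OF f' h']]) simp
  show "smooth_on U (\<lambda>y. f y * h y)" by (rule smooth_from_poly[OF U P pmul[OF f' h']]) simp
qed

lemma sm_const: "open U \<Longrightarrow> smooth_on U (\<lambda>y. c)"
  by (rule smooth_from_poly[of U "{}" "\<lambda>y. c"]) (auto simp: pdc_def intro: pc)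

lemma sm_cong:
  assumes "open U" "smooth_on U f" "\<And>x. x \<in> U \<Longrightarrow> h x = f x" shows "smooth_on U h"
proof -
  obtain S where S: "f \<in> S" "pdc U S" using smooth_pdc[OF assms(2)] by blast
  show ?thesis by (rule smooth_from_poly[OF assms(1) S(2) pb[OF S(1)]]) (use assms(3) in auto)
qed

lemma sm_pd: "smooth_on U f \<Longrightarrow> smooth_on U (pd i f)"
  unfolding smooth_on_def by blast

lemma sm_diff_on: "smooth_on U f \<Longrightarrow> f differentiable_on U"
  unfolding smooth_on_def by blast

lemma sm_diff: "open U \<Longrightarrow> x \<in> U \<Longrightarrow> smooth_on U f \<Longrightarrow> f differentiable (at x)"
  using sm_diff_on differentiable_on_eq_differentiable_at by blast

lemma sm_cmult: "open U \<Longrightarrow> smooth_on U f \<Longrightarrow> smooth_on U (\<lambda>y. c * f y)"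
  using sm_mult[OF _ sm_const] by blast

lemma sm_sub: "open U \<Longrightarrow> smooth_on U f \<Longrightarrow> smooth_on U h \<Longrightarrow> smooth_on U (\<lambda>y. f y - h y)"
  using sm_add[of U f "\<lambda>y. (-1) * h y"] sm_cmult[of U h "-1"] by (simp add: sm_cong)

lemma sm_sum:
  assumes "open U" "finite S" "\<And>p. p \<in> S \<Longrightarrow> smooth_on U (f p)"
  shows "smooth_on U (\<lambda>y. \<Sum>p\<in>S. f p y)"
  using assms(2,3)
proof (induction S rule: finite_induct)
  case empty then show ?case using sm_const[OF assms(1), of 0] by simp
next
  case (insert a F)
  then show ?case using sm_add[OF assms(1), of "f a" "\<lambda>y. \<Sum>p\<in>F. f p y"] by simp
qed

lemma pdc_UN:
  assumes "\<And>a. pdc U (B a)" shows "pdc U (\<Union>a. B a)"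
  unfolding pdc_def
proof (intro conjI ballI allI)
  fix b assume "b \<in> (\<Union>a. B a)"
  then show "b differentiable_on U" using assms unfolding pdc_def by blast
next
  fix b i assume "b \<in> (\<Union>a. B a)"
  then obtain a where a: "b \<in> B a" by blast
  then obtain q where q: "q \<in> polyset (B a)" "\<forall>x\<in>U. pd i b x = q x" using assms[of a] unfolding pdc_def by blast
  have "q \<in> polyset (\<Union>a. B a)" by (rule polyset_mono[OF _ q(1)]) blast
  then show "\<exists>q\<in>polyset (\<Union>a. B a). \<forall>x\<in>U. pd i b x = q x" using q(2) by blast
qed

lemma inv_det_mats:
  fixes A :: "real^'n::finite^'n"
  assumes "det A \<noteq> 0"
  shows "A ** matrix_inv A = mat 1" "matrix_inv A ** A = mat 1"
proof -
  have "invertible A" using assms invertible_det_nz by blast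
  then have "\<exists>A'. A ** A' = mat 1 \<and> A' ** A = mat 1" unfolding invertible_def by blast
  then have "A ** matrix_inv A = mat 1 \<and> matrix_inv A ** A = mat 1"
    unfolding matrix_inv_def by (rule someI_ex)
  then show "A ** matrix_inv A = mat 1" "matrix_inv A ** A = mat 1" by auto
qed

lemma inv_sym:
  fixes A :: "real^'n::finite^'n"
  assumes "det A \<noteq> 0" "transpose A = A"
  shows "transpose (matrix_inv A) = matrix_inv A"
proof -
  let ?G = "matrix_inv A"
  have "transpose ?G ** A = mat 1"
    using arg_cong[OF inv_det_mats(1)[OF assms(1)], of transpose] assms(2)
    by (simp add: matrix_transpose_mul)
  then have "transpose ?G = (transpose ?G ** A) ** ?G"
    using inv_det_mats(1)[OF assms(1)] by (metis matrix_mul_assoc matrix_mul_rid)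
  then show ?thesis using \<open>transpose ?G ** A = mat 1\<close> by simp
qed

lemma inv_cramer:
  fixes A :: "real^'n::finite^'n"
  assumes "det A \<noteq> 0"
  shows "matrix_inv A $ k $ j = det (\<chi> a b. if b = k then axis j 1 $ a else A $ a $ b) / det A"
proof -
  have "A *v (matrix_inv A *v axis j 1) = axis j 1"
    by (simp add: matrix_vector_mul_assoc inv_det_mats(1)[OF assms])
  then have "matrix_inv A *v axis j 1 = (\<chi> k. det (\<chi> a b. if b = k then axis j 1 $ a else A $ a $ b) / det A)"
    using cramer[OF assms] by blast
  then have "(matrix_inv A *v axis j 1) $ k = det (\<chi> a b. if b = k then axis j 1 $ a else A $ a $ b) / det A"
    by simp
  moreover have "(matrix_inv A *v axis j 1) $ k = matrix_inv A $ k $ j"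
    by (simp add: matrix_vector_mult_def axis_def if_distrib cong: if_cong)
  ultimately show ?thesis by simp
qed

locale PR =
  fixes U :: "(real^'n::finite) set" and g :: "'n metric"
  assumes U: "open U" and PRg: "pseudo_riemannian U g"
begin

lemma gsm: "smooth_on U (\<lambda>x. g x $ i $ j)"
  using PRg unfolding pseudo_riemannian_def by blast

lemma gsym: "x \<in> U \<Longrightarrow> g x $ i $ j = g x $ j $ i"
proof -
  assume x: "x \<in> U"
  have "transpose (g x) = g x" using PRg x unfolding pseudo_riemannian_def by blast
  then have "transpose (g x) $ j $ i = g x $ j $ i" by simp
  then show ?thesis by (simp add: transpose_def)
qed

lemma gdet: "x \<in> U \<Longrightarrow> det (g x) \<noteq> 0"
  using PRg unfolding pseudo_riemannian_def by blast

lemma Gsym: "x \<in> U \<Longrightarrow> ginv g x i j = ginv g x j i"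
proof -
  assume x: "x \<in> U"
  have "transpose (g x) = g x" using PRg x unfolding pseudo_riemannian_def by blast
  then have "transpose (matrix_inv (g x)) = matrix_inv (g x)" using inv_sym gdet[OF x] by blast
  then have "transpose (matrix_inv (g x)) $ j $ i = matrix_inv (g x) $ j $ i" by simp
  then show ?thesis unfolding ginv_def by (simp add: transpose_def)
qed

lemma gG: "x \<in> U \<Longrightarrow> (\<Sum>p\<in>UNIV. g x $ i $ p * ginv g x p j) = (if i = j then 1 else 0)"
  using arg_cong[where f="\<lambda>M. M $ i $ j", OF inv_det_mats(1)[OF gdet]]
  unfolding ginv_def by (simp add: matrix_matrix_mult_def mat_def)

lemma Gg: "x \<in> U \<Longrightarrow> (\<Sum>p\<in>UNIV. ginv g x i p * g x $ p $ j) = (if i = j then 1 else 0)"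
  using arg_cong[where f="\<lambda>M. M $ i $ j", OF inv_det_mats(2)[OF gdet]]
  unfolding ginv_def by (simp add: matrix_matrix_mult_def mat_def)

lemma Gsm: "smooth_on U (\<lambda>x. ginv g x i j)"
proof -
  have "\<forall>ab. \<exists>S. (\<lambda>x. g x $ fst ab $ snd ab) \<in> S \<and> pdc U S"
    using smooth_pdc[OF gsm] by blast
  from choice[OF this] obtain SS where SS: "\<And>ab. (\<lambda>x. g x $ fst ab $ snd ab) \<in> SS ab \<and> pdc U (SS ab)"
    by blast
  define B0 where "B0 = (\<Union>ab. SS ab)"
  have B0: "pdc U B0" unfolding B0_def by (rule pdc_UN) (use SS in blast)
  have gB0: "(\<lambda>x. g x $ a $ b) \<in> polyset B0" for a b
    using SS[of "(a,b)"] unfolding B0_def by (intro pb) auto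
  have dB0: "(\<lambda>y. det (g y)) \<in> polyset B0"
    by (rule poly_det) (use gB0 in simp)
  define di where "di = (\<lambda>y. inverse (det (g y)))"
  define B where "B = B0 \<union> {di}"
  have m: "p \<in> polyset B0 \<Longrightarrow> p \<in> polyset B" for p
    by (rule polyset_mono[of B0]) (auto simp: B_def)
  have ddiff: "(\<lambda>y. det (g y)) differentiable (at x)" if "x \<in> U" for x
    using poly_diff_on[OF _ dB0] B0 that U unfolding pdc_def
    by (meson differentiable_on_eq_differentiable_at)
  have didiff: "di differentiable (at x)" if "x \<in> U" for x
    using Deriv.has_derivative_inverse[OF gdet[OF that] dwork[OF ddiff[OF that]]] unfolding di_def differentiable_def
    by blast
  have pB: "pdc U B" unfolding pdc_def
  proof (intro conjI ballI allI)
    fix b assume "b \<in> B"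
    then have "b \<in> B0 \<or> b \<in> {di}" by (auto simp add: B_def)
    then show "b differentiable_on U"
    proof
      assume "b \<in> B0" then show ?thesis using B0 unfolding pdc_def by blast
    next
      assume "b \<in> {di}" then show ?thesis using didiff
        by (simp add: differentiable_at_imp_differentiable_on)
    qed
  next
    fix b i assume "b \<in> B"
    then have "b \<in> B0 \<or> b \<in> {di}" by (auto simp add: B_def)
    then show "\<exists>q\<in>polyset B. \<forall>x\<in>U. pd i b x = q x"
    proof
      assume "b \<in> B0"
      then obtain q where "q \<in> polyset B0" "\<forall>x\<in>U. pd i b x = q x" using B0 unfolding pdc_def by blast
      then show ?thesis using m by blast
    next
      assume "b \<in> {di}"
      then have b: "b = di" by simp
      obtain q where q: "q \<in> polyset B0" "\<forall>x\<in>U. pd i (\<lambda>y. det (g y)) x = q x"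
        using poly_pd[OF U B0 dB0] by blast
      have "\<forall>x\<in>U. pd i b x = (\<lambda>y. (-1) * (di y * (q y * di y))) x"
      proof
        fix x assume x: "x \<in> U"
        have "(di has_derivative (\<lambda>h. - (inverse (det (g x)) * frechet_derivative (\<lambda>y. det (g y)) (at x) h * inverse (det (g x))))) (at x)"
          unfolding di_def by (rule Deriv.has_derivative_inverse[OF gdet[OF x] dwork[OF ddiff[OF x]]])
        then have "pd i di x = - (inverse (det (g x)) * pd i (\<lambda>y. det (g y)) x * inverse (det (g x)))"
          by (subst pd_has) (simp_all add: pd_def)
        then show "pd i b x = (\<lambda>y. (-1) * (di y * (q y * di y))) x" using b q(2) x by (simp add: di_def)
      qed
      moreover have "(\<lambda>y. (-1) * (di y * (q y * di y))) \<in> polyset B"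
        by (intro pmul pc pb m q(1)) (auto simp: B_def)
      ultimately show ?thesis by (intro bexI[of _ "\<lambda>y. (-1) * (di y * (q y * di y))"]) simp_all
    qed
  qed
  have Mp: "(\<lambda>y. det (\<chi> a b. if b = i then axis j 1 $ a else g y $ a $ b)) \<in> polyset B"
  proof (rule poly_det)
    fix a b
    show "(\<lambda>y. (\<chi> a b. if b = i then axis j 1 $ a else g y $ a $ b) $ a $ b) \<in> polyset B"
    proof (cases "b = i")
      case True then show ?thesis by (simp add: pc)
    next
      case False then show ?thesis using m[OF gB0[of a b]] by simp
    qed
  qed
  have "(\<lambda>y. det (\<chi> a b. if b = i then axis j 1 $ a else g y $ a $ b) * di y) \<in> polyset B"
    by (intro pmul Mp pb) (simp add: B_def)
  then show ?thesis
    by (rule smooth_from_poly[OF U pB])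
       (simp add: ginv_def inv_cramer[OF gdet] di_def divide_inverse)
qed

end

lemma dir_deriv:
  fixes f :: "real^'n::finite \<Rightarrow> real"
  assumes "f differentiable (at (a + s *\<^sub>R v))"
  shows "((\<lambda>s. f (a + s *\<^sub>R v)) has_real_derivative frechet_derivative f (at (a + s *\<^sub>R v)) v) (at s)"
proof -
  let ?F = "frechet_derivative f (at (a + s *\<^sub>R v))"
  have h1: "((\<lambda>s. a + s *\<^sub>R v) has_derivative (\<lambda>h. h *\<^sub>R v)) (at s)"
    by (auto intro!: derivative_eq_intros)
  have h2: "(f has_derivative ?F) (at (a + s *\<^sub>R v))" using dwork[OF assms] .
  have bl: "bounded_linear ?F" using h2 has_derivative_bounded_linear by blast
  have h2': "(f has_derivative ?F) (at ((\<lambda>s. a + s *\<^sub>R v) s))" using h2 by simp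
  have "((f \<circ> (\<lambda>s. a + s *\<^sub>R v)) has_derivative (?F \<circ> (\<lambda>h. h *\<^sub>R v))) (at s)"
    by (rule diff_chain_at[OF h1 h2'])
  then have "((\<lambda>s. f (a + s *\<^sub>R v)) has_derivative (\<lambda>h. ?F (h *\<^sub>R v))) (at s)"
    by (simp add: o_def)
  then show ?thesis
    by (rule has_derivative_imp_has_field_derivative) (simp add: linear_scale[OF bounded_linear.linear[OF bl]])
qed

lemma schwarz_lim:
  fixes f :: "real^'n::finite \<Rightarrow> real"
  assumes U: "open U" and x: "x \<in> U" and fd: "\<And>y. y \<in> U \<Longrightarrow> f differentiable (at y)"
    and gd: "pd i f differentiable (at x)"
  shows "((\<lambda>t. (f (x + t *\<^sub>R axis i 1 + t *\<^sub>R axis j 1) - f (x + t *\<^sub>R axis i 1)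
              - f (x + t *\<^sub>R axis j 1) + f x) / t\<^sup>2) \<longlongrightarrow> pd j (pd i f) x) (at_right 0)"
proof (rule tendstoI)
  fix \<epsilon> :: real assume \<epsilon>: "\<epsilon> > 0"
  define e where "e = axis i (1::real)"
  define d where "d = axis j (1::real)"
  define D where "D = frechet_derivative (pd i f) (at x)"
  have hD: "(pd i f has_derivative D) (at x)" unfolding D_def using dwork[OF gd] .
  have bl: "bounded_linear D" using hD has_derivative_bounded_linear by blast
  have Dd: "D d = pd j (pd i f) x" unfolding D_def d_def pd_def by simp
  obtain r where r: "r > 0" "ball x r \<subseteq> U" using U x open_contains_ball by blast
  obtain \<delta> where \<delta>: "\<delta> > 0" "\<And>y. norm (y - x) < \<delta> \<Longrightarrow>
      norm (pd i f y - pd i f x - D (y - x)) \<le> (\<epsilon>/4) * norm (y - x)"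
    using hD[unfolded has_derivative_at_alt] \<epsilon> by (metis divide_pos_pos zero_less_numeral)
  define b where "b = min \<delta> r / 2"
  have b: "b > 0" unfolding b_def using \<delta> r by simp
  have "\<forall>t>0. t < b \<longrightarrow> dist ((f (x + t *\<^sub>R e + t *\<^sub>R d) - f (x + t *\<^sub>R e)
              - f (x + t *\<^sub>R d) + f x) / t\<^sup>2) (pd j (pd i f) x) < \<epsilon>"
  proof (intro allI impI)
    fix t :: real assume t: "t > 0" "t < b"
    have ne: "norm e = 1" "norm d = 1" unfolding e_def d_def by simp_all
    have inU: "y \<in> U" if "norm (y - x) \<le> 2 * t" for y
    proof -
      have "dist x y < r" using that t unfolding b_def by (simp add: dist_norm norm_minus_commute)
      then show ?thesis using r by auto
    qed
    define \<phi> where "\<phi> = (\<lambda>s. f ((x + t *\<^sub>R d) + s *\<^sub>R e) - f (x + s *\<^sub>R e))"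
    define \<phi>' where "\<phi>' = (\<lambda>s. pd i f ((x + t *\<^sub>R d) + s *\<^sub>R e) - pd i f (x + s *\<^sub>R e))"
    have der: "DERIV \<phi> s :> \<phi>' s" if "0 \<le> s" "s \<le> t" for s
    proof -
      have n1: "norm ((x + t *\<^sub>R d + s *\<^sub>R e) - x) \<le> 2 * t"
      proof -
        have "norm (t *\<^sub>R d + s *\<^sub>R e) \<le> norm (t *\<^sub>R d) + norm (s *\<^sub>R e)" by (rule norm_triangle_ineq)
        also have "\<dots> = t + s" using ne t that by simp
        finally show ?thesis using that by (simp add: algebra_simps)
      qed
      have n2: "norm ((x + s *\<^sub>R e) - x) \<le> 2 * t" using ne t that by simp
      have d1: "f differentiable (at (x + t *\<^sub>R d + s *\<^sub>R e))" using fd inU n1 by blast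
      have d2: "f differentiable (at (x + s *\<^sub>R e))" using fd inU n2 by blast
      show ?thesis unfolding \<phi>_def \<phi>'_def
        using DERIV_diff[OF dir_deriv[OF d1] dir_deriv[OF d2]] unfolding pd_def e_def by simp
    qed
    obtain \<xi> where \<xi>: "0 < \<xi>" "\<xi> < t" "\<phi> t - \<phi> 0 = (t - 0) * \<phi>' \<xi>"
      using MVT2[of 0 t \<phi> \<phi>'] der t by auto
    have "\<phi> t - \<phi> 0 = f (x + t *\<^sub>R e + t *\<^sub>R d) - f (x + t *\<^sub>R e) - f (x + t *\<^sub>R d) + f x"
      unfolding \<phi>_def by (simp add: algebra_simps)
    then have Delta: "f (x + t *\<^sub>R e + t *\<^sub>R d) - f (x + t *\<^sub>R e) - f (x + t *\<^sub>R d) + f x = t * \<phi>' \<xi>"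
      using \<xi> by simp
    define y1 where "y1 = x + t *\<^sub>R d + \<xi> *\<^sub>R e"
    define y2 where "y2 = x + \<xi> *\<^sub>R e"
    have ny1: "norm (y1 - x) \<le> 2 * t"
    proof -
      have "norm (t *\<^sub>R d + \<xi> *\<^sub>R e) \<le> norm (t *\<^sub>R d) + norm (\<xi> *\<^sub>R e)" by (rule norm_triangle_ineq)
      also have "\<dots> = t + \<xi>" using ne t \<xi> by simp
      finally show ?thesis using \<xi> unfolding y1_def by (simp add: algebra_simps)
    qed
    have ny2: "norm (y2 - x) \<le> t" unfolding y2_def using ne \<xi> by simp
    have e1: "norm (pd i f y1 - pd i f x - D (y1 - x)) \<le> (\<epsilon>/4) * (2 * t)"
    proof -
      have "norm (y1 - x) < \<delta>" using ny1 t unfolding b_def by simp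
      then have "norm (pd i f y1 - pd i f x - D (y1 - x)) \<le> (\<epsilon>/4) * norm (y1 - x)" using \<delta>(2) by blast
      also have "\<dots> \<le> (\<epsilon>/4) * (2 * t)" using ny1 \<epsilon> by (intro mult_left_mono) auto
      finally show ?thesis .
    qed
    have e2: "norm (pd i f y2 - pd i f x - D (y2 - x)) \<le> (\<epsilon>/4) * t"
    proof -
      have "norm (y2 - x) < \<delta>" using ny2 t unfolding b_def by simp
      then have "norm (pd i f y2 - pd i f x - D (y2 - x)) \<le> (\<epsilon>/4) * norm (y2 - x)" using \<delta>(2) by blast
      also have "\<dots> \<le> (\<epsilon>/4) * t" using ny2 \<epsilon> by (intro mult_left_mono) auto
      finally show ?thesis .
    qed
    have lin: "D (y1 - x) - D (y2 - x) = t * D d"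
    proof -
      have "y1 - x = t *\<^sub>R d + \<xi> *\<^sub>R e" "y2 - x = \<xi> *\<^sub>R e" unfolding y1_def y2_def by simp_all
      then show ?thesis by (simp add: linear_add[OF bounded_linear.linear[OF bl]] linear_scale[OF bounded_linear.linear[OF bl]])
    qed
    have "\<phi>' \<xi> = pd i f y1 - pd i f y2" unfolding \<phi>'_def y1_def y2_def by simp
    then have "\<phi>' \<xi> - t * D d = (pd i f y1 - pd i f x - D (y1 - x)) - (pd i f y2 - pd i f x - D (y2 - x))"
      using lin by simp
    then have "\<bar>\<phi>' \<xi> - t * D d\<bar> \<le> \<bar>pd i f y1 - pd i f x - D (y1 - x)\<bar> + \<bar>pd i f y2 - pd i f x - D (y2 - x)\<bar>"
      by (simp only: abs_triangle_ineq4)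
    then have "\<bar>\<phi>' \<xi> - t * D d\<bar> \<le> (\<epsilon>/4) * (2 * t) + (\<epsilon>/4) * t"
      using e1 e2 unfolding real_norm_def by linarith
    moreover have "0 < \<epsilon> * t" using \<epsilon> t by simp
    ultimately have bnd: "\<bar>\<phi>' \<xi> - t * D d\<bar> < \<epsilon> * t" by linarith
    have "(t * \<phi>' \<xi>) / t\<^sup>2 - D d = (\<phi>' \<xi> - t * D d) / t"
      using t by (simp add: power2_eq_square field_simps)
    then have "\<bar>(t * \<phi>' \<xi>) / t\<^sup>2 - D d\<bar> < \<epsilon>"
      using bnd t by (simp add: abs_divide pos_divide_less_eq)
    then show "dist ((f (x + t *\<^sub>R e + t *\<^sub>R d) - f (x + t *\<^sub>R e) - f (x + t *\<^sub>R d) + f x) / t\<^sup>2)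
        (pd j (pd i f) x) < \<epsilon>"
      using Delta Dd by (simp add: dist_real_def)
  qed
  then show "\<forall>\<^sub>F t in at_right 0. dist ((f (x + t *\<^sub>R axis i 1 + t *\<^sub>R axis j 1) - f (x + t *\<^sub>R axis i 1)
              - f (x + t *\<^sub>R axis j 1) + f x) / t\<^sup>2) (pd j (pd i f) x) < \<epsilon>"
    unfolding eventually_at_right_field e_def d_def using b by blast
qed

lemma schwarz:
  fixes f :: "real^'n::finite \<Rightarrow> real"
  assumes U: "open U" and x: "x \<in> U" and fd: "\<And>y. y \<in> U \<Longrightarrow> f differentiable (at y)"
    and gi: "pd i f differentiable (at x)" and gj: "pd j f differentiable (at x)"
  shows "pd j (pd i f) x = pd i (pd j f) x"
proof -
  note l1 = schwarz_lim[OF U x fd gi, of j]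
  note l2 = schwarz_lim[OF U x fd gj, of i]
  have eq: "(\<lambda>t. (f (x + t *\<^sub>R axis j 1 + t *\<^sub>R axis i 1) - f (x + t *\<^sub>R axis j 1)
              - f (x + t *\<^sub>R axis i 1) + f x) / t\<^sup>2) =
            (\<lambda>t. (f (x + t *\<^sub>R axis i 1 + t *\<^sub>R axis j 1) - f (x + t *\<^sub>R axis i 1)
              - f (x + t *\<^sub>R axis j 1) + f x) / t\<^sup>2)"
    by (rule ext) (simp add: algebra_simps)
  show ?thesis using tendsto_unique[OF trivial_limit_at_right_real l1] l2 unfolding eq by simp
qed

lemma sm_schwarz:
  assumes "open U" "x \<in> U" "smooth_on U f"
  shows "pd j (pd i f) x = pd i (pd j f) x"
  by (rule schwarz[OF assms(1,2)]) (use assms sm_diff sm_pd in blast)+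

context PR
begin

lemma s_add: "smooth_on U f \<Longrightarrow> smooth_on U h \<Longrightarrow> smooth_on U (\<lambda>y. f y + h y)" using sm_add U by blast
lemma s_sub: "smooth_on U f \<Longrightarrow> smooth_on U h \<Longrightarrow> smooth_on U (\<lambda>y. f y - h y)" using sm_sub U by blast
lemma s_mult: "smooth_on U f \<Longrightarrow> smooth_on U h \<Longrightarrow> smooth_on U (\<lambda>y. f y * h y)" using sm_mult U by blast
lemma s_cmult: "smooth_on U f \<Longrightarrow> smooth_on U (\<lambda>y. c * f y)" using sm_cmult U by blast
lemma s_const: "smooth_on U (\<lambda>y. c)" using sm_const U by blast
lemma s_minus: "smooth_on U f \<Longrightarrow> smooth_on U (\<lambda>y. - f y)"
  using s_cmult[of f "-1"] by simp
lemma s_div: "smooth_on U f \<Longrightarrow> smooth_on U (\<lambda>y. f y / c)"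
  using s_cmult[of f "1/c"] by (simp add: divide_inverse mult.commute)
lemma s_sum: "(\<And>p. smooth_on U (f p)) \<Longrightarrow> smooth_on U (\<lambda>y. \<Sum>p\<in>(UNIV::'a::finite set). f p y)"
  using sm_sum[OF U, of UNIV f] by simp

lemmas s_intros = s_add s_sub s_mult s_cmult s_const s_minus s_div s_sum sm_pd gsm Gsm

lemma christ_sm: "smooth_on U (christ g m i j)"
proof -
  have e: "christ g m i j = (\<lambda>x. (1/2) * (\<Sum>p\<in>UNIV. ginv g x m p *
      (pd i (\<lambda>y. g y $ p $ j) x + pd j (\<lambda>y. g y $ p $ i) x - pd p (\<lambda>y. g y $ i $ j) x)))"
    by (rule ext) (simp add: christ_def)
  show ?thesis unfolding e by (intro s_intros)
qed

lemma riem_up_sm: "smooth_on U (riem_up g e k l m)"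
proof -
  have e: "riem_up g e k l m = (\<lambda>x. pd l (christ g e k m) x - pd m (christ g e k l) x
     + (\<Sum>p\<in>UNIV. christ g e p l x * christ g p k m x - christ g e p m x * christ g p k l x))"
    by (rule ext) (simp add: riem_up_def)
  show ?thesis unfolding e by (intro s_intros christ_sm)
qed

lemma riem_sm: "smooth_on U (riem g j k l m)"
proof -
  have e: "riem g j k l m = (\<lambda>x. \<Sum>e\<in>UNIV. g x $ j $ e * riem_up g e k l m x)"
    by (rule ext) (simp add: riem_def)
  show ?thesis unfolding e by (intro s_intros riem_up_sm)
qed

lemma ricci_sm: "smooth_on U (ricci g k l)"
proof -
  have e: "ricci g k l = (\<lambda>x. - (\<Sum>m\<in>UNIV. \<Sum>p\<in>UNIV. ginv g x m p * riem g m k l p x))"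
    by (rule ext) (simp add: ricci_def)
  show ?thesis unfolding e by (intro s_intros riem_sm)
qed

lemma scal_sm: "smooth_on U (scal g)"
proof -
  have e: "scal g = (\<lambda>x. \<Sum>m\<in>UNIV. \<Sum>p\<in>UNIV. ginv g x m p * ricci g m p x)"
    by (rule ext) (simp add: scal_def)
  show ?thesis unfolding e by (intro s_intros ricci_sm)
qed

lemma weyl_sm: "smooth_on U (weyl g j k l m)"
proof -
  have e: "weyl g j k l m = (\<lambda>x. riem g j k l m x
      + (1 / (real CARD('n) - 2)) * (g x $ m $ j * ricci g k l x - g x $ m $ k * ricci g j l x
                         + ricci g m j x * g x $ k $ l - ricci g m k x * g x $ j $ l)
      - scal g x / ((real CARD('n) - 1) * (real CARD('n) - 2)) * (g x $ m $ j * g x $ k $ l - g x $ m $ k * g x $ j $ l))"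
    by (rule ext) (simp add: weyl_def Let_def)
  show ?thesis unfolding e by (intro s_intros riem_sm ricci_sm scal_sm)
qed

lemma dG: "x \<in> U \<Longrightarrow> (\<lambda>y. ginv g y i j) differentiable (at x)" using sm_diff[OF U _ Gsm] by blast
lemma dg: "x \<in> U \<Longrightarrow> (\<lambda>y. g y $ i $ j) differentiable (at x)" using sm_diff[OF U _ gsm] by blast
lemma dchrist: "x \<in> U \<Longrightarrow> christ g m i j differentiable (at x)" using sm_diff[OF U _ christ_sm] by blast
lemma dweyl: "x \<in> U \<Longrightarrow> weyl g j k l m differentiable (at x)" using sm_diff[OF U _ weyl_sm] by blast
lemma dpdg: "x \<in> U \<Longrightarrow> pd k (\<lambda>y. g y $ i $ j) differentiable (at x)" using sm_diff[OF U _ sm_pd[OF gsm]] by blast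

end

lemma delta_r [simp]: "(\<Sum>q\<in>(UNIV::'a::finite set). f q * (if q = k then 1 else 0)) = (f k :: real)"
proof -
  have "(\<Sum>q\<in>(UNIV::'a set). f q * (if q = k then 1 else 0)) = (\<Sum>q\<in>UNIV. if q = k then f q else 0)"
    by (rule sum.cong) auto
  then show ?thesis by simp
qed
lemma delta_r' [simp]: "(\<Sum>q\<in>(UNIV::'a::finite set). f q * (if k = q then 1 else 0)) = (f k :: real)"
proof -
  have "(\<Sum>q\<in>(UNIV::'a set). f q * (if k = q then 1 else 0)) = (\<Sum>q\<in>UNIV. if q = k then f q else 0)"
    by (rule sum.cong) auto
  then show ?thesis by simp
qed
lemma delta_l [simp]: "(\<Sum>q\<in>(UNIV::'a::finite set). (if q = k then 1 else 0) * f q) = (f k :: real)"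
  using delta_r[of f k] by (simp add: mult.commute)
lemma delta_l' [simp]: "(\<Sum>q\<in>(UNIV::'a::finite set). (if k = q then 1 else 0) * f q) = (f k :: real)"
  using delta_r'[of f k] by (simp add: mult.commute)

lemma sum3_rot: "(\<Sum>b\<in>A. \<Sum>a\<in>B. \<Sum>q\<in>C. f a b q) = (\<Sum>a\<in>B. \<Sum>q\<in>C. \<Sum>b\<in>A. f a b q)"
  by (subst sum.swap) (rule sum.cong[OF refl], rule sum.swap)

context PR
begin

lemma pdg_sym: "x \<in> U \<Longrightarrow> pd p (\<lambda>y. g y $ i $ j) x = pd p (\<lambda>y. g y $ j $ i) x"
  by (rule pd_local[OF U]) (auto simp: gsym)

lemma christ_sym: "x \<in> U \<Longrightarrow> christ g m i j x = christ g m j i x"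
  unfolding christ_def using pdg_sym by (simp add: algebra_simps)

lemma christ_sym_fun: "x \<in> U \<Longrightarrow> pd l (christ g m i j) x = pd l (christ g m j i) x"
  by (rule pd_local[OF U]) (auto simp: christ_sym)

lemma christ_low: "x \<in> U \<Longrightarrow> (\<Sum>p\<in>UNIV. christ g p i j x * g x $ p $ k) =
   (1/2) * (pd i (\<lambda>y. g y $ k $ j) x + pd j (\<lambda>y. g y $ k $ i) x - pd k (\<lambda>y. g y $ i $ j) x)"
proof -
  assume x: "x \<in> U"
  define D where "D = (\<lambda>q. pd i (\<lambda>y. g y $ q $ j) x + pd j (\<lambda>y. g y $ q $ i) x - pd q (\<lambda>y. g y $ i $ j) x)"
  have "(\<Sum>p\<in>UNIV. christ g p i j x * g x $ p $ k) = (\<Sum>p\<in>UNIV. \<Sum>q\<in>UNIV. (1/2) * (ginv g x p q * D q * g x $ p $ k))"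
    unfolding christ_def D_def by (simp add: sum_distrib_left sum_distrib_right mult_ac)
  also have "\<dots> = (\<Sum>q\<in>UNIV. \<Sum>p\<in>UNIV. (1/2) * (ginv g x p q * D q * g x $ p $ k))"
    by (rule sum.swap)
  also have "\<dots> = (\<Sum>q\<in>UNIV. ((1/2) * D q) * (\<Sum>p\<in>UNIV. ginv g x q p * g x $ p $ k))"
    by (simp add: sum_distrib_left Gsym[OF x] mult_ac)
  also have "\<dots> = (\<Sum>q\<in>UNIV. ((1/2) * D q) * (if q = k then 1 else 0))"
    by (simp only: Gg[OF x])
  also have "\<dots> = (1/2) * D k" by (rule delta_r)
  finally show ?thesis unfolding D_def .
qed

lemma metric_compat: "x \<in> U \<Longrightarrow> pd i (\<lambda>y. g y $ j $ k) x =
   (\<Sum>p\<in>UNIV. christ g p i j x * g x $ p $ k + christ g p i k x * g x $ j $ p)"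
proof -
  assume x: "x \<in> U"
  have "(\<Sum>p\<in>UNIV. christ g p i j x * g x $ p $ k + christ g p i k x * g x $ j $ p) =
        (\<Sum>p\<in>UNIV. christ g p i j x * g x $ p $ k) + (\<Sum>p\<in>UNIV. christ g p i k x * g x $ p $ j)"
    by (simp add: sum.distrib gsym[OF x, of j])
  also have "\<dots> = pd i (\<lambda>y. g y $ j $ k) x"
    unfolding christ_low[OF x] using pdg_sym[OF x] by (simp add: algebra_simps)
  finally show ?thesis by simp
qed

lemma dGinv: "x \<in> U \<Longrightarrow> pd i (\<lambda>y. ginv g y m p) x =
   - (\<Sum>q\<in>UNIV. christ g m i q x * ginv g x q p + christ g p i q x * ginv g x m q)"
proof -
  assume x: "x \<in> U"
  define dG where "dG a = pd i (\<lambda>y. ginv g y m a) x" for a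
  define dg where "dg a b = pd i (\<lambda>y. g y $ a $ b) x" for a b
  define G where "G a b = ginv g x a b" for a b
  define gg where "gg a b = g x $ a $ b" for a b
  define C where "C q a b = christ g q a b x" for q a b
  have E: "(\<Sum>a\<in>UNIV. dG a * gg a b) = - (\<Sum>a\<in>UNIV. G m a * dg a b)" for b
  proof -
    have "pd i (\<lambda>y. \<Sum>a\<in>UNIV. ginv g y m a * g y $ a $ b) x = pd i (\<lambda>y. if m = b then 1 else 0) x"
      by (rule pd_local[OF U x]) (simp add: Gg)
    also have "\<dots> = 0" by (rule pd_const)
    finally have "pd i (\<lambda>y. \<Sum>a\<in>UNIV. ginv g y m a * g y $ a $ b) x = 0" .
    moreover have "pd i (\<lambda>y. \<Sum>a\<in>UNIV. ginv g y m a * g y $ a $ b) x =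
        (\<Sum>a\<in>UNIV. dG a * gg a b + G m a * dg a b)"
      using x by (simp add: pd_sum pd_mult dG dg differentiable_mult dG_def dg_def G_def gg_def)
    ultimately show ?thesis by (simp add: sum.distrib eq_neg_iff_add_eq_0)
  qed
  have "dG p = (\<Sum>a\<in>UNIV. dG a * (if a = p then 1 else 0))" by simp
  also have "\<dots> = (\<Sum>a\<in>UNIV. dG a * (\<Sum>b\<in>UNIV. gg a b * G b p))"
    unfolding gg_def G_def by (simp add: gG[OF x])
  also have "\<dots> = (\<Sum>b\<in>UNIV. (\<Sum>a\<in>UNIV. dG a * gg a b) * G b p)"
    by (simp add: sum_distrib_left sum_distrib_right mult_ac) (rule sum.swap)
  also have "\<dots> = - (\<Sum>b\<in>UNIV. \<Sum>a\<in>UNIV. G m a * dg a b * G b p)"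
    by (simp add: E sum_distrib_right sum_negf)
  also have "\<dots> = - (\<Sum>b\<in>UNIV. \<Sum>a\<in>UNIV. \<Sum>q\<in>UNIV. G m a * C q i a * gg q b * G b p
         + G m a * gg a q * C q i b * G b p)"
    unfolding dg_def metric_compat[OF x]
    by (simp add: sum_distrib_left sum_distrib_right distrib_left distrib_right C_def gg_def mult_ac)
  also have "\<dots> = - ((\<Sum>a\<in>UNIV. \<Sum>q\<in>UNIV. \<Sum>b\<in>UNIV. G m a * C q i a * gg q b * G b p)
         + (\<Sum>b\<in>UNIV. \<Sum>q\<in>UNIV. \<Sum>a\<in>UNIV. G m a * gg a q * C q i b * G b p))"
  proof -
    have s2: "(\<Sum>b\<in>UNIV. \<Sum>a\<in>UNIV. \<Sum>q\<in>UNIV. G m a * gg a q * C q i b * G b p) =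
       (\<Sum>b\<in>UNIV. \<Sum>q\<in>UNIV. \<Sum>a\<in>UNIV. G m a * gg a q * C q i b * G b p)"
      by (rule sum.cong[OF refl], rule sum.swap)
    have s1: "(\<Sum>b\<in>UNIV. \<Sum>a\<in>UNIV. \<Sum>q\<in>UNIV. G m a * C q i a * gg q b * G b p) =
       (\<Sum>a\<in>UNIV. \<Sum>q\<in>UNIV. \<Sum>b\<in>UNIV. G m a * C q i a * gg q b * G b p)"
      by (rule sum3_rot)
    show ?thesis by (simp only: sum.distrib s1 s2)
  qed
  also have "\<dots> = - ((\<Sum>a\<in>UNIV. \<Sum>q\<in>UNIV. G m a * C q i a * (\<Sum>b\<in>UNIV. gg q b * G b p))
         + (\<Sum>b\<in>UNIV. \<Sum>q\<in>UNIV. (\<Sum>a\<in>UNIV. G m a * gg a q) * (C q i b * G b p)))"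
    by (simp add: sum_distrib_left sum_distrib_right mult_ac)
  also have "\<dots> = - ((\<Sum>a\<in>UNIV. G m a * C p i a) + (\<Sum>b\<in>UNIV. C m i b * G b p))"
    unfolding gg_def G_def by (simp only: gG[OF x] Gg[OF x] delta_r delta_l')
  finally show ?thesis unfolding dG_def G_def C_def by (simp add: sum.distrib mult_ac)
qed

end

lemma antisym_sum_zero:
  fixes F :: "'a \<Rightarrow> 'a \<Rightarrow> real"
  assumes "\<And>p q. F q p = - F p q"
  shows "(\<Sum>p\<in>A. \<Sum>q\<in>A. F p q) = 0"
proof -
  have "(\<Sum>p\<in>A. \<Sum>q\<in>A. F p q) = (\<Sum>q\<in>A. \<Sum>p\<in>A. F p q)" by (rule sum.swap)
  also have "\<dots> = (\<Sum>q\<in>A. \<Sum>p\<in>A. - F q p)" by (intro sum.cong refl) (rule assms)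
  also have "\<dots> = - (\<Sum>p\<in>A. \<Sum>q\<in>A. F p q)" by (simp add: sum_negf)
  finally show ?thesis by simp
qed

context PR
begin

lemma riem_up_anti: "riem_up g e k l m x = - riem_up g e k m l x"
  unfolding riem_up_def by (simp add: sum_subtractf)

lemma riem_anti2: "riem g j k l m x = - riem g j k m l x"
  unfolding riem_def by (simp add: riem_up_anti[of _ k l m x] sum_negf)

lemma riem_up_bianchi1: "x \<in> U \<Longrightarrow> riem_up g e k l m x + riem_up g e l m k x + riem_up g e m k l x = 0"
proof -
  assume x: "x \<in> U"
  have a: "pd l (christ g e k m) x = pd l (christ g e m k) x" "pd m (christ g e k l) x = pd m (christ g e l k) x"
    "pd k (christ g e l m) x = pd k (christ g e m l) x" using christ_sym_fun[OF x] by auto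
  have b: "(\<Sum>p\<in>UNIV. christ g e p l x * christ g p k m x - christ g e p m x * christ g p k l x)
     + (\<Sum>p\<in>UNIV. christ g e p m x * christ g p l k x - christ g e p k x * christ g p l m x)
     + (\<Sum>p\<in>UNIV. christ g e p k x * christ g p m l x - christ g e p l x * christ g p m k x) = 0"
    by (simp add: sum.distrib[symmetric] christ_sym[OF x, of _ l k] christ_sym[OF x, of _ m k] christ_sym[OF x, of _ m l])
  show ?thesis unfolding riem_up_def using a b by linarith
qed

lemma riem_bianchi1: "x \<in> U \<Longrightarrow> riem g j k l m x + riem g j l m k x + riem g j m k l x = 0"
proof -
  assume x: "x \<in> U"
  have "riem g j k l m x + riem g j l m k x + riem g j m k l x =
     (\<Sum>e\<in>UNIV. g x $ j $ e * (riem_up g e k l m x + riem_up g e l m k x + riem_up g e m k l x))"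
    unfolding riem_def by (simp add: sum.distrib distrib_left)
  then show ?thesis using riem_up_bianchi1[OF x] by simp
qed

lemma ddg: "x \<in> U \<Longrightarrow> pd l (pd m (\<lambda>y. g y $ j $ k)) x =
  (\<Sum>p\<in>UNIV. pd l (christ g p m j) x * g x $ p $ k + pd l (christ g p m k) x * g x $ j $ p)
  + (\<Sum>p\<in>UNIV. \<Sum>q\<in>UNIV. christ g p m j x * christ g q l p x * g x $ q $ k
       + christ g p m j x * christ g q l k x * g x $ p $ q
       + christ g p m k x * christ g q l j x * g x $ q $ p
       + christ g p m k x * christ g q l p x * g x $ j $ q)"
proof -
  assume x: "x \<in> U"
  have "pd l (pd m (\<lambda>y. g y $ j $ k)) x =
     pd l (\<lambda>y. \<Sum>p\<in>UNIV. christ g p m j y * g y $ p $ k + christ g p m k y * g y $ j $ p) x"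
    by (rule pd_local[OF U x]) (simp add: metric_compat)
  also have "\<dots> = (\<Sum>p\<in>UNIV. pd l (christ g p m j) x * g x $ p $ k + christ g p m j x * pd l (\<lambda>y. g y $ p $ k) x
       + (pd l (christ g p m k) x * g x $ j $ p + christ g p m k x * pd l (\<lambda>y. g y $ j $ p) x))"
    using x by (simp add: pd_sum pd_add pd_mult dchrist dg)
  also have "\<dots> = (\<Sum>p\<in>UNIV. pd l (christ g p m j) x * g x $ p $ k + pd l (christ g p m k) x * g x $ j $ p)
     + (\<Sum>p\<in>UNIV. christ g p m j x * pd l (\<lambda>y. g y $ p $ k) x + christ g p m k x * pd l (\<lambda>y. g y $ j $ p) x)"
    by (simp add: sum.distrib[symmetric] algebra_simps)
  also have "(\<Sum>p\<in>UNIV. christ g p m j x * pd l (\<lambda>y. g y $ p $ k) x + christ g p m k x * pd l (\<lambda>y. g y $ j $ p) x)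
     = (\<Sum>p\<in>UNIV. \<Sum>q\<in>UNIV. christ g p m j x * christ g q l p x * g x $ q $ k
       + christ g p m j x * christ g q l k x * g x $ p $ q
       + christ g p m k x * christ g q l j x * g x $ q $ p
       + christ g p m k x * christ g q l p x * g x $ j $ q)"
    unfolding metric_compat[OF x] by (simp add: sum_distrib_left sum.distrib[symmetric] algebra_simps)
  finally show ?thesis .
qed

lemma riem_expand: "riem g j k l m x =
   (\<Sum>e\<in>UNIV. g x $ j $ e * pd l (christ g e k m) x - g x $ j $ e * pd m (christ g e k l) x)
   + (\<Sum>q\<in>UNIV. \<Sum>p\<in>UNIV. g x $ j $ q * christ g q p l x * christ g p k m x
        - g x $ j $ q * christ g q p m x * christ g p k l x)"
  unfolding riem_def riem_up_def
  by (simp add: distrib_left right_diff_distrib sum.distrib sum_distrib_left sum_subtractf mult_ac)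

lemma riem_anti1: "x \<in> U \<Longrightarrow> riem g j k l m x + riem g k j l m x = 0"
proof -
  assume x: "x \<in> U"
  define C where "C q a b = christ g q a b x" for q a b
  define gg where "gg a b = g x $ a $ b" for a b
  define F1 where "F1 p q = C p m j * C q l p * gg q k + C p m k * C q l p * gg j q
      - C p l j * C q m p * gg q k - C p l k * C q m p * gg j q" for p q
  define F2 where "F2 p q = C p m j * C q l k * gg p q + C p m k * C q l j * gg q p
      - C p l j * C q m k * gg p q - C p l k * C q m j * gg q p" for p q
  have gs: "gg a b = gg b a" for a b unfolding gg_def using gsym[OF x] by simp
  have cs: "C q a b = C q b a" for q a b unfolding C_def using christ_sym[OF x] by simp
  have F2z: "(\<Sum>p\<in>UNIV. \<Sum>q\<in>UNIV. F2 p q) = 0"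
    by (rule antisym_sum_zero) (simp add: F2_def gs[of q p for p q] algebra_simps)
  have P: "pd l (pd m (\<lambda>y. g y $ j $ k)) x - pd m (pd l (\<lambda>y. g y $ j $ k)) x =
      (\<Sum>p\<in>UNIV. pd l (christ g p m j) x * gg p k + pd l (christ g p m k) x * gg j p
          - pd m (christ g p l j) x * gg p k - pd m (christ g p l k) x * gg j p)
      + (\<Sum>p\<in>UNIV. \<Sum>q\<in>UNIV. F1 p q + F2 p q)"
  proof -
    have A: "(\<Sum>p\<in>UNIV. pd l (christ g p m j) x * g x $ p $ k + pd l (christ g p m k) x * g x $ j $ p)
      - (\<Sum>p\<in>UNIV. pd m (christ g p l j) x * g x $ p $ k + pd m (christ g p l k) x * g x $ j $ p)
      = (\<Sum>p\<in>UNIV. pd l (christ g p m j) x * gg p k + pd l (christ g p m k) x * gg j p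
          - pd m (christ g p l j) x * gg p k - pd m (christ g p l k) x * gg j p)"
      unfolding sum_subtractf[symmetric] by (intro sum.cong refl) (simp add: gg_def)
    have B: "(\<Sum>p\<in>UNIV. \<Sum>q\<in>UNIV. christ g p m j x * christ g q l p x * g x $ q $ k
       + christ g p m j x * christ g q l k x * g x $ p $ q
       + christ g p m k x * christ g q l j x * g x $ q $ p
       + christ g p m k x * christ g q l p x * g x $ j $ q)
     - (\<Sum>p\<in>UNIV. \<Sum>q\<in>UNIV. christ g p l j x * christ g q m p x * g x $ q $ k
       + christ g p l j x * christ g q m k x * g x $ p $ q
       + christ g p l k x * christ g q m j x * g x $ q $ p
       + christ g p l k x * christ g q m p x * g x $ j $ q)
     = (\<Sum>p\<in>UNIV. \<Sum>q\<in>UNIV. F1 p q + F2 p q)"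
      unfolding sum_subtractf[symmetric] by (intro sum.cong refl) (simp add: F1_def F2_def C_def gg_def)
    show ?thesis unfolding ddg[OF x] using A B by linarith
  qed
  have "pd l (pd m (\<lambda>y. g y $ j $ k)) x = pd m (pd l (\<lambda>y. g y $ j $ k)) x"
    using sm_schwarz[OF U x gsm] by simp
  then have P0: "(\<Sum>p\<in>UNIV. pd l (christ g p m j) x * gg p k + pd l (christ g p m k) x * gg j p
          - pd m (christ g p l j) x * gg p k - pd m (christ g p l k) x * gg j p)
      + (\<Sum>p\<in>UNIV. \<Sum>q\<in>UNIV. F1 p q) = 0"
    using P F2z by (simp add: sum.distrib)
  have R: "riem g j k l m x + riem g k j l m x =
      (\<Sum>p\<in>UNIV. pd l (christ g p m j) x * gg p k + pd l (christ g p m k) x * gg j p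
          - pd m (christ g p l j) x * gg p k - pd m (christ g p l k) x * gg j p)
      + (\<Sum>q\<in>UNIV. \<Sum>p\<in>UNIV. F1 p q)"
  proof -
    have d: "pd a (christ g q b c) x = pd a (christ g q c b) x" for a q b c using christ_sym_fun[OF x] by simp
    have e1: "(\<Sum>e\<in>UNIV. g x $ j $ e * pd l (christ g e k m) x - g x $ j $ e * pd m (christ g e k l) x)
        + (\<Sum>e\<in>UNIV. g x $ k $ e * pd l (christ g e j m) x - g x $ k $ e * pd m (christ g e j l) x)
        = (\<Sum>p\<in>UNIV. pd l (christ g p m j) x * gg p k + pd l (christ g p m k) x * gg j p
          - pd m (christ g p l j) x * gg p k - pd m (christ g p l k) x * gg j p)"
      unfolding sum.distrib[symmetric]
      by (intro sum.cong refl) (simp add: gg_def gsym[OF x, of k] d[of _ _ k m] d[of _ _ k l] d[of _ _ j m] d[of _ _ j l] algebra_simps)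
    have e2: "(\<Sum>q\<in>UNIV. \<Sum>p\<in>UNIV. g x $ j $ q * christ g q p l x * christ g p k m x
        - g x $ j $ q * christ g q p m x * christ g p k l x)
       + (\<Sum>q\<in>UNIV. \<Sum>p\<in>UNIV. g x $ k $ q * christ g q p l x * christ g p j m x
        - g x $ k $ q * christ g q p m x * christ g p j l x)
       = (\<Sum>q\<in>UNIV. \<Sum>p\<in>UNIV. F1 p q)"
      unfolding sum.distrib[symmetric]
      by (intro sum.cong refl) (simp add: F1_def C_def gg_def gsym[OF x, of _ k] christ_sym[OF x, of _ _ l] christ_sym[OF x, of _ _ m]
           christ_sym[OF x, of _ k] christ_sym[OF x, of _ j] algebra_simps)
    show ?thesis unfolding riem_expand using e1 e2 by linarith
  qed
  have "(\<Sum>q\<in>UNIV. \<Sum>p\<in>UNIV. F1 p q) = (\<Sum>p\<in>UNIV. \<Sum>q\<in>UNIV. F1 p q)" by (rule sum.swap)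
  then show ?thesis using R P0 by linarith
qed


lemma riem_pair: "x \<in> U \<Longrightarrow> riem g j k l m x = riem g l m j k x"
proof -
  assume x: "x \<in> U"
  define R where "R a b c d = riem g a b c d x" for a b c d
  have a1: "R a b c d = - R b a c d" for a b c d using riem_anti1[OF x, of a b c d] unfolding R_def by simp
  have a2: "R a b c d = - R a b d c" for a b c d using riem_anti2[of a b c d x] unfolding R_def by simp
  have b: "R a b c d + R a c d b + R a d b c = 0" for a b c d using riem_bianchi1[OF x] unfolding R_def by simp
  have "R j k l m = R l m j k"
    using b[of j l m k] b[of l m k j] b[of m k j l] b[of k j l m] a1[of j k l m] a2[of j k l m] a2[of k j l m] a1[of j l m k] a2[of j l m k] a2[of l j m k] a1[of j m k l] a2[of j m k l] a2[of m j k l] a1[of k j l m] a2[of k j l m] a2[of j k l m] a1[of k l m j] a2[of k l m j] a2[of l k m j] a1[of k m j l] a2[of k m j l] a2[of m k j l] a1[of l j m k] a2[of l j m k] a2[of j l m k] a1[of l k j m] a2[of l k j m] a2[of k l j m] a1[of l m k j] a2[of l m k j] a2[of m l k j] a1[of m j l k] a2[of m j l k] a2[of j m l k] a1[of m k j l] a2[of m k j l] a2[of k m j l] a1[of m l k j] a2[of m l k j] a2[of l m k j]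
    by linarith
  then show ?thesis unfolding R_def .
qed

lemma ricci_sym: "x \<in> U \<Longrightarrow> ricci g k l x = ricci g l k x"
proof -
  assume x: "x \<in> U"
  have r: "riem g m l k p x = riem g p k l m x" for m p
    using riem_pair[OF x, of m l k p] riem_anti1[OF x, of k p m l] riem_anti2[of p k m l x] by simp
  have "(\<Sum>m\<in>UNIV. \<Sum>p\<in>UNIV. ginv g x m p * riem g m l k p x)
      = (\<Sum>m\<in>UNIV. \<Sum>p\<in>UNIV. ginv g x m p * riem g p k l m x)"
    by (simp add: r)
  also have "\<dots> = (\<Sum>p\<in>UNIV. \<Sum>m\<in>UNIV. ginv g x m p * riem g p k l m x)" by (rule sum.swap)
  also have "\<dots> = (\<Sum>p\<in>UNIV. \<Sum>m\<in>UNIV. ginv g x p m * riem g p k l m x)" by (intro sum.cong refl) (subst Gsym[OF x], rule refl)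
  finally show ?thesis unfolding ricci_def by simp
qed

end

context PR
begin

lemma weyl_anti1: "x \<in> U \<Longrightarrow> weyl g j k l m x = - weyl g k j l m x"
proof -
  assume x: "x \<in> U"
  have r: "riem g k j l m x = - riem g j k l m x" using riem_anti1[OF x, of j k l m] by simp
  show ?thesis unfolding weyl_def Let_def r by (simp add: algebra_simps)
qed

lemma weyl_anti2: "x \<in> U \<Longrightarrow> weyl g j k l m x = - weyl g j k m l x"
proof -
  assume x: "x \<in> U"
  have r: "riem g j k m l x = - riem g j k l m x" using riem_anti2[of j k m l x] by simp
  show ?thesis unfolding weyl_def Let_def r by (simp add: algebra_simps gsym[OF x] ricci_sym[OF x])
qed

lemma weyl_pair: "x \<in> U \<Longrightarrow> weyl g j k l m x = weyl g l m j k x"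
proof -
  assume x: "x \<in> U"
  have r: "riem g l m j k x = riem g j k l m x" using riem_pair[OF x, of j k l m] by simp
  show ?thesis unfolding weyl_def Let_def r by (simp add: algebra_simps gsym[OF x] ricci_sym[OF x])
qed

lemma weyl_bianchi1: "x \<in> U \<Longrightarrow> weyl g j k l m x + weyl g j l m k x + weyl g j m k l x = 0"
proof -
  assume x: "x \<in> U"
  have r: "riem g j k l m x + riem g j l m k x + riem g j m k l x = 0" using riem_bianchi1[OF x] by simp
  have "weyl g j k l m x + weyl g j l m k x + weyl g j m k l x =
     riem g j k l m x + riem g j l m k x + riem g j m k l x"
    unfolding weyl_def Let_def by (simp add: algebra_simps gsym[OF x] ricci_sym[OF x])
  then show ?thesis using r by simp
qed

lemma tr_weyl: "x \<in> U \<Longrightarrow> CARD('n) \<ge> 3 \<Longrightarrow> (\<Sum>j\<in>UNIV. \<Sum>m\<in>UNIV. ginv g x j m * weyl g j k l m x) = 0"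
proof -
  assume x: "x \<in> U" and n3: "CARD('n) \<ge> 3"
  define n where "n = real CARD('n)"
  define G where "G a b = ginv g x a b" for a b
  define gg where "gg a b = g x $ a $ b" for a b
  define Ric where "Ric a b = ricci g a b x" for a b
  define s where "s = scal g x"
  have n2: "n - 2 \<noteq> 0" "n - 1 \<noteq> 0" using n3 unfolding n_def by auto
  have c1: "(\<Sum>j\<in>UNIV. \<Sum>m\<in>UNIV. G j m * riem g j k l m x) = - Ric k l"
    unfolding G_def Ric_def ricci_def by simp
  have c2: "(\<Sum>j\<in>UNIV. \<Sum>m\<in>UNIV. G j m * gg m j) = n"
  proof -
    have "(\<Sum>m\<in>UNIV. ginv g x j m * g x $ m $ j) = 1" for j using Gg[OF x, of j j] by simp
    then show ?thesis unfolding G_def gg_def n_def by simp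
  qed
  have c3: "(\<Sum>j\<in>UNIV. \<Sum>m\<in>UNIV. G j m * (gg m k * X j)) = X k" for X
  proof -
    have "(\<Sum>j\<in>UNIV. \<Sum>m\<in>UNIV. G j m * (gg m k * X j)) = (\<Sum>j\<in>UNIV. X j * (\<Sum>m\<in>UNIV. G j m * gg m k))"
      by (simp add: sum_distrib_left mult_ac)
    also have "\<dots> = X k" unfolding G_def gg_def by (simp add: Gg[OF x])
    finally show ?thesis .
  qed
  have c4: "(\<Sum>j\<in>UNIV. \<Sum>m\<in>UNIV. G j m * (X m * gg j l)) = X l" for X
  proof -
    have "(\<Sum>j\<in>UNIV. \<Sum>m\<in>UNIV. G j m * (X m * gg j l)) = (\<Sum>m\<in>UNIV. \<Sum>j\<in>UNIV. G j m * (X m * gg j l))"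
      by (rule sum.swap)
    also have "\<dots> = (\<Sum>m\<in>UNIV. \<Sum>j\<in>UNIV. G m j * (X m * gg j l))"
      by (intro sum.cong refl) (simp only: G_def, subst Gsym[OF x], rule refl)
    also have "\<dots> = (\<Sum>m\<in>UNIV. X m * (\<Sum>j\<in>UNIV. G m j * gg j l))"
      by (simp add: sum_distrib_left mult_ac)
    also have "\<dots> = X l" unfolding G_def gg_def by (simp add: Gg[OF x])
    finally show ?thesis .
  qed
  have c5: "(\<Sum>j\<in>UNIV. \<Sum>m\<in>UNIV. G j m * Ric m j) = s"
  proof -
    have "(\<Sum>j\<in>UNIV. \<Sum>m\<in>UNIV. G j m * Ric m j) = (\<Sum>m\<in>UNIV. \<Sum>j\<in>UNIV. G j m * Ric m j)" by (rule sum.swap)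
    also have "\<dots> = (\<Sum>m\<in>UNIV. \<Sum>j\<in>UNIV. G m j * Ric m j)"
      by (intro sum.cong refl) (simp only: G_def, subst Gsym[OF x], rule refl)
    finally show ?thesis unfolding s_def scal_def Ric_def G_def .
  qed
  define a where "a = 1 / (n - 2)"
  define b where "b = 1 / ((n - 1) * (n - 2))"
  have w: "weyl g j k l m x = riem g j k l m x + a * (gg m j * Ric k l - gg m k * Ric j l + Ric m j * gg k l - Ric m k * gg j l)
      - s * b * (gg m j * gg k l - gg m k * gg j l)" for j m
    unfolding weyl_def Let_def a_def b_def gg_def Ric_def s_def n_def by simp
  have e: "(\<Sum>j\<in>UNIV. \<Sum>m\<in>UNIV. ginv g x j m * weyl g j k l m x) =
     (\<Sum>j\<in>UNIV. \<Sum>m\<in>UNIV. G j m * riem g j k l m x)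
     + a * ((\<Sum>j\<in>UNIV. \<Sum>m\<in>UNIV. G j m * gg m j) * Ric k l
        - (\<Sum>j\<in>UNIV. \<Sum>m\<in>UNIV. G j m * (gg m k * Ric j l))
        + (\<Sum>j\<in>UNIV. \<Sum>m\<in>UNIV. G j m * Ric m j) * gg k l
        - (\<Sum>j\<in>UNIV. \<Sum>m\<in>UNIV. G j m * (Ric m k * gg j l)))
     - s * b * ((\<Sum>j\<in>UNIV. \<Sum>m\<in>UNIV. G j m * gg m j) * gg k l
        - (\<Sum>j\<in>UNIV. \<Sum>m\<in>UNIV. G j m * (gg m k * gg j l)))"
    unfolding w G_def
    by (simp add: sum.distrib sum_subtractf sum_distrib_left sum_distrib_right algebra_simps)
  have "(\<Sum>j\<in>UNIV. \<Sum>m\<in>UNIV. ginv g x j m * weyl g j k l m x) =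
     - Ric k l + a * (n * Ric k l - Ric k l + s * gg k l - Ric l k)
     - s * b * (n * gg k l - gg k l)"
    unfolding e c1 c2 c5 c3[of "\<lambda>j. Ric j l"] c4[of "\<lambda>m. Ric m k"] c3[of "\<lambda>j. gg j l"] by simp
  also have "\<dots> = - Ric k l * (1 - a * (n - 2)) + s * gg k l * (a - b * (n - 1))"
    using ricci_sym[OF x, of l k] unfolding Ric_def by (simp add: algebra_simps)
  also have "\<dots> = 0"
  proof -
    have ha: "a * (n - 2) = 1" unfolding a_def using n2 by simp
    have hb: "b * (n - 1) = a" unfolding a_def b_def using n2 by simp
    show ?thesis using ha hb by simp
  qed
  finally show ?thesis .
qed

end

lemma sum3_rev: "(\<Sum>i\<in>A. \<Sum>m\<in>B. \<Sum>p\<in>C. f i m p) = (\<Sum>p\<in>C. \<Sum>m\<in>B. \<Sum>i\<in>A. f i m p)"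
proof -
  have "(\<Sum>i\<in>A. \<Sum>m\<in>B. \<Sum>p\<in>C. f i m p) = (\<Sum>i\<in>A. \<Sum>p\<in>C. \<Sum>m\<in>B. f i m p)"
    by (rule sum.cong[OF refl], rule sum.swap)
  also have "\<dots> = (\<Sum>p\<in>C. \<Sum>i\<in>A. \<Sum>m\<in>B. f i m p)" by (rule sum.swap)
  also have "\<dots> = (\<Sum>p\<in>C. \<Sum>m\<in>B. \<Sum>i\<in>A. f i m p)" by (rule sum.cong[OF refl], rule sum.swap)
  finally show ?thesis .
qed

context PR begin

lemma pd_weyl_nabla: "pd j (weyl g k i l m) x = nabla4 g (weyl g) j k i l m x
   + (\<Sum>p\<in>UNIV. christ g p j k x * weyl g p i l m x + christ g p j i x * weyl g k p l m x
                 + christ g p j l x * weyl g k i p m x + christ g p j m x * weyl g k i l p x)"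
  unfolding nabla4_def by simp

lemma nabla_tr24:
  assumes x: "x \<in> U" and T: "\<And>y k l. y \<in> U \<Longrightarrow> (\<Sum>i\<in>UNIV. \<Sum>m\<in>UNIV. ginv g y i m * weyl g k i l m y) = 0"
  shows "(\<Sum>i\<in>UNIV. \<Sum>m\<in>UNIV. ginv g x i m * nabla4 g (weyl g) j k i l m x) = 0"
proof -
  define C where "C a b c d = weyl g a b c d x" for a b c d
  define G where "G a b = ginv g x a b" for a b
  define Ch where "Ch a b c = christ g a b c x" for a b c
  define N where "N a b c d e = nabla4 g (weyl g) a b c d e x" for a b c d e
  define X0 where "X0 = (\<Sum>i\<in>UNIV. \<Sum>m\<in>UNIV. G i m * N j k i l m)"
  define X1 where "X1 = (\<Sum>i\<in>UNIV. \<Sum>m\<in>UNIV. \<Sum>p\<in>UNIV. G i m * (Ch p j k * C p i l m))"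
  define X2 where "X2 = (\<Sum>i\<in>UNIV. \<Sum>m\<in>UNIV. \<Sum>p\<in>UNIV. G i m * (Ch p j i * C k p l m))"
  define X3 where "X3 = (\<Sum>i\<in>UNIV. \<Sum>m\<in>UNIV. \<Sum>p\<in>UNIV. G i m * (Ch p j l * C k i p m))"
  define X4 where "X4 = (\<Sum>i\<in>UNIV. \<Sum>m\<in>UNIV. \<Sum>p\<in>UNIV. G i m * (Ch p j m * C k i l p))"
  define Y1 where "Y1 = (\<Sum>i\<in>UNIV. \<Sum>m\<in>UNIV. \<Sum>q\<in>UNIV. Ch i j q * G q m * C k i l m)"
  define Y2 where "Y2 = (\<Sum>i\<in>UNIV. \<Sum>m\<in>UNIV. \<Sum>q\<in>UNIV. Ch m j q * G i q * C k i l m)"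
  have "pd j (\<lambda>y. \<Sum>i\<in>UNIV. \<Sum>m\<in>UNIV. ginv g y i m * weyl g k i l m y) x = 0"
    by (rule pd_zero_on[OF U x]) (rule T)
  moreover have "pd j (\<lambda>y. \<Sum>i\<in>UNIV. \<Sum>m\<in>UNIV. ginv g y i m * weyl g k i l m y) x
      = (\<Sum>i\<in>UNIV. \<Sum>m\<in>UNIV. pd j (\<lambda>y. ginv g y i m) x * C k i l m + G i m * pd j (weyl g k i l m) x)"
    unfolding C_def G_def using x
    by (simp add: pd_sum pd_mult dG dweyl differentiable_sum differentiable_mult)
  moreover have "\<dots> = X0 + X1 + X2 + X3 + X4 - Y1 - Y2"
  proof -
    have S1: "(\<Sum>i\<in>UNIV. \<Sum>m\<in>UNIV. G i m * pd j (weyl g k i l m) x) = X0 + X1 + X2 + X3 + X4"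
      unfolding pd_weyl_nabla X0_def X1_def X2_def X3_def X4_def C_def G_def Ch_def N_def
      by (simp only: distrib_left sum_distrib_left sum.distrib)
    have S2: "(\<Sum>i\<in>UNIV. \<Sum>m\<in>UNIV. pd j (\<lambda>y. ginv g y i m) x * C k i l m) = - (Y1 + Y2)"
      unfolding dGinv[OF x] Y1_def Y2_def C_def G_def Ch_def
      by (simp only: mult_minus_left distrib_right sum_distrib_right sum.distrib sum_negf)
    show ?thesis by (simp only: sum.distrib S1 S2)
  qed
  ultimately have E: "X0 + X1 + X2 + X3 + X4 - Y1 - Y2 = 0" by simp
  have "X1 = (\<Sum>p\<in>UNIV. Ch p j k * (\<Sum>i\<in>UNIV. \<Sum>m\<in>UNIV. G i m * C p i l m))"
    unfolding X1_def by (rule trans[OF sum3_rot[symmetric]]) (simp add: sum_distrib_left mult_ac)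
  then have X1: "X1 = 0" unfolding G_def C_def using T[OF x] by simp
  have "X3 = (\<Sum>p\<in>UNIV. Ch p j l * (\<Sum>i\<in>UNIV. \<Sum>m\<in>UNIV. G i m * C k i p m))"
    unfolding X3_def by (rule trans[OF sum3_rot[symmetric]]) (simp add: sum_distrib_left mult_ac)
  then have X3: "X3 = 0" unfolding G_def C_def using T[OF x] by simp
  have X2: "X2 = Y1"
  proof -
    have "X2 = (\<Sum>p\<in>UNIV. \<Sum>m\<in>UNIV. \<Sum>i\<in>UNIV. G i m * (Ch p j i * C k p l m))"
      unfolding X2_def by (rule sum3_rev)
    then show ?thesis unfolding Y1_def by (simp add: mult_ac)
  qed
  have X4: "X4 = Y2"
  proof -
    have "X4 = (\<Sum>i\<in>UNIV. \<Sum>p\<in>UNIV. \<Sum>m\<in>UNIV. G i m * (Ch p j m * C k i l p))"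
      unfolding X4_def by (rule sum.cong[OF refl], rule sum.swap)
    then show ?thesis unfolding Y2_def by (simp add: mult_ac)
  qed
  show ?thesis using E X1 X2 X3 X4 unfolding X0_def G_def N_def by simp
qed

lemma pd_A_nabla: "pd i (\<lambda>y. A y p) x = nabla1 g A i p x + (\<Sum>q\<in>UNIV. christ g q i p x * A x q)"
  unfolding nabla1_def by simp

lemma pd_weyl_nabla': "pd i (weyl g j k l m) x = nabla4 g (weyl g) i j k l m x
   + (\<Sum>q\<in>UNIV. christ g q i j x * weyl g q k l m x + christ g q i k x * weyl g j q l m x
                 + christ g q i l x * weyl g j k q m x + christ g q i m x * weyl g j k l q x)"
  unfolding nabla4_def by simp

lemma nabla_A:
  assumes x: "x \<in> U" and As: "\<And>p. smooth_on U (\<lambda>y. A y p)"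
    and T: "\<And>y j k l. y \<in> U \<Longrightarrow> (\<Sum>m\<in>UNIV. \<Sum>p\<in>UNIV. ginv g y m p * A y p * weyl g j k l m y) = 0"
  shows "(\<Sum>m\<in>UNIV. \<Sum>p\<in>UNIV. ginv g x m p * (nabla1 g A i p x * weyl g j k l m x
            + A x p * nabla4 g (weyl g) i j k l m x)) = 0"
proof -
  define C where "C a b c d = weyl g a b c d x" for a b c d
  define G where "G a b = ginv g x a b" for a b
  define Ch where "Ch a b c = christ g a b c x" for a b c
  define N where "N a b c d e = nabla4 g (weyl g) a b c d e x" for a b c d e
  define NA where "NA a b = nabla1 g A a b x" for a b
  define Z0 where "Z0 = (\<Sum>m\<in>UNIV. \<Sum>p\<in>UNIV. G m p * (NA i p * C j k l m + A x p * N i j k l m))"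
  define Z1 where "Z1 = (\<Sum>m\<in>UNIV. \<Sum>p\<in>UNIV. \<Sum>q\<in>UNIV. G m p * (Ch q i p * A x q) * C j k l m)"
  define Z3 where "Z3 = (\<Sum>m\<in>UNIV. \<Sum>p\<in>UNIV. \<Sum>q\<in>UNIV. G m p * A x p * (Ch q i j * C q k l m))"
  define Z4 where "Z4 = (\<Sum>m\<in>UNIV. \<Sum>p\<in>UNIV. \<Sum>q\<in>UNIV. G m p * A x p * (Ch q i k * C j q l m))"
  define Z5 where "Z5 = (\<Sum>m\<in>UNIV. \<Sum>p\<in>UNIV. \<Sum>q\<in>UNIV. G m p * A x p * (Ch q i l * C j k q m))"
  define Z2 where "Z2 = (\<Sum>m\<in>UNIV. \<Sum>p\<in>UNIV. \<Sum>q\<in>UNIV. G m p * A x p * (Ch q i m * C j k l q))"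
  define W2 where "W2 = (\<Sum>m\<in>UNIV. \<Sum>p\<in>UNIV. \<Sum>q\<in>UNIV. Ch m i q * G q p * (A x p * C j k l m))"
  define W1 where "W1 = (\<Sum>m\<in>UNIV. \<Sum>p\<in>UNIV. \<Sum>q\<in>UNIV. Ch p i q * G m q * (A x p * C j k l m))"
  have dA: "(\<lambda>y. A y p) differentiable (at x)" for p using sm_diff[OF U x As] .
  have "pd i (\<lambda>y. \<Sum>m\<in>UNIV. \<Sum>p\<in>UNIV. ginv g y m p * A y p * weyl g j k l m y) x = 0"
    by (rule pd_zero_on[OF U x]) (rule T)
  moreover have "pd i (\<lambda>y. \<Sum>m\<in>UNIV. \<Sum>p\<in>UNIV. ginv g y m p * A y p * weyl g j k l m y) x
      = (\<Sum>m\<in>UNIV. \<Sum>p\<in>UNIV. pd i (\<lambda>y. ginv g y m p) x * (A x p * C j k l m)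
           + G m p * (pd i (\<lambda>y. A y p) x * C j k l m + A x p * pd i (weyl g j k l m) x))"
    unfolding C_def G_def using x
    by (simp add: pd_sum pd_mult dG dA dweyl differentiable_sum differentiable_mult mult.assoc)
  moreover have "\<dots> = Z0 + (Z1 + (Z3 + Z4 + Z5 + Z2)) - (W2 + W1)"
  proof -
    have S1: "(\<Sum>m\<in>UNIV. \<Sum>p\<in>UNIV. G m p * (pd i (\<lambda>y. A y p) x * C j k l m + A x p * pd i (weyl g j k l m) x))
       = Z0 + (Z1 + (Z3 + Z4 + Z5 + Z2))"
    proof -
      have "G m p * (pd i (\<lambda>y. A y p) x * C j k l m + A x p * pd i (weyl g j k l m) x)
        = G m p * (NA i p * C j k l m + A x p * N i j k l m)
          + ((\<Sum>q\<in>UNIV. G m p * (Ch q i p * A x q) * C j k l m)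
          + ((\<Sum>q\<in>UNIV. G m p * A x p * (Ch q i j * C q k l m))
          + (\<Sum>q\<in>UNIV. G m p * A x p * (Ch q i k * C j q l m))
          + (\<Sum>q\<in>UNIV. G m p * A x p * (Ch q i l * C j k q m))
          + (\<Sum>q\<in>UNIV. G m p * A x p * (Ch q i m * C j k l q))))" for m p
        unfolding pd_A_nabla pd_weyl_nabla' NA_def N_def C_def Ch_def
        by (simp add: sum_distrib_left sum_distrib_right sum.distrib algebra_simps)
      then show ?thesis unfolding Z0_def Z1_def Z2_def Z3_def Z4_def Z5_def
        by (simp only: sum.distrib)
    qed
    have S2: "(\<Sum>m\<in>UNIV. \<Sum>p\<in>UNIV. pd i (\<lambda>y. ginv g y m p) x * (A x p * C j k l m)) = - (W2 + W1)"
      unfolding dGinv[OF x] W1_def W2_def C_def G_def Ch_def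
      by (simp only: mult_minus_left distrib_right sum_distrib_right sum.distrib sum_negf)
    show ?thesis by (simp only: sum.distrib S1 S2)
  qed
  ultimately have E: "Z0 + (Z1 + (Z3 + Z4 + Z5 + Z2)) - (W2 + W1) = 0" by simp
  have TT: "(\<Sum>m\<in>UNIV. \<Sum>p\<in>UNIV. G m p * A x p * C a b c m) = 0" for a b c
    unfolding G_def C_def using T[OF x] by simp
  have Z3: "Z3 = 0"
  proof -
    have "Z3 = (\<Sum>q\<in>UNIV. Ch q i j * (\<Sum>m\<in>UNIV. \<Sum>p\<in>UNIV. G m p * A x p * C q k l m))"
      unfolding Z3_def by (rule trans[OF sum3_rot[symmetric]]) (simp add: sum_distrib_left mult_ac)
    then show ?thesis using TT by simp
  qed
  have Z4: "Z4 = 0"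
  proof -
    have "Z4 = (\<Sum>q\<in>UNIV. Ch q i k * (\<Sum>m\<in>UNIV. \<Sum>p\<in>UNIV. G m p * A x p * C j q l m))"
      unfolding Z4_def by (rule trans[OF sum3_rot[symmetric]]) (simp add: sum_distrib_left mult_ac)
    then show ?thesis using TT by simp
  qed
  have Z5: "Z5 = 0"
  proof -
    have "Z5 = (\<Sum>q\<in>UNIV. Ch q i l * (\<Sum>m\<in>UNIV. \<Sum>p\<in>UNIV. G m p * A x p * C j k q m))"
      unfolding Z5_def by (rule trans[OF sum3_rot[symmetric]]) (simp add: sum_distrib_left mult_ac)
    then show ?thesis using TT by simp
  qed
  have Z1: "Z1 = W1"
  proof -
    have "Z1 = (\<Sum>m\<in>UNIV. \<Sum>q\<in>UNIV. \<Sum>p\<in>UNIV. G m p * (Ch q i p * A x q) * C j k l m)"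
      unfolding Z1_def by (rule sum.cong[OF refl], rule sum.swap)
    then show ?thesis unfolding W1_def by (simp add: mult_ac)
  qed
  have Z2: "Z2 = W2"
  proof -
    have "Z2 = (\<Sum>q\<in>UNIV. \<Sum>p\<in>UNIV. \<Sum>m\<in>UNIV. G m p * A x p * (Ch q i m * C j k l q))"
      unfolding Z2_def by (rule sum3_rev)
    then show ?thesis unfolding W2_def by (simp add: mult_ac)
  qed
  have "Z0 = 0" using E Z1 Z2 Z3 Z4 Z5 by simp
  then show ?thesis unfolding Z0_def G_def NA_def C_def N_def .
qed

end

lemma mv3: "(\<Sum>i\<in>A. \<Sum>j\<in>A. \<Sum>k\<in>A. F i j k) = (\<Sum>j\<in>A. \<Sum>k\<in>A. \<Sum>i\<in>A. F i j k)"
  by (rule sum3_rot)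

lemma mv4: "(\<Sum>i\<in>A. \<Sum>j\<in>A. \<Sum>k\<in>A. \<Sum>l\<in>A. F i j k l) = (\<Sum>j\<in>A. \<Sum>k\<in>A. \<Sum>l\<in>A. \<Sum>i\<in>A. F i j k l)"
  by (subst sum.swap) (rule sum.cong[OF refl], rule mv3)

lemma mv5: "(\<Sum>i\<in>A. \<Sum>j\<in>A. \<Sum>k\<in>A. \<Sum>l\<in>A. \<Sum>m\<in>A. F i j k l m) =
    (\<Sum>j\<in>A. \<Sum>k\<in>A. \<Sum>l\<in>A. \<Sum>m\<in>A. \<Sum>i\<in>A. F i j k l m)"
  by (subst sum.swap) (rule sum.cong[OF refl], rule mv4)

lemma swap14: "(\<Sum>i\<in>A. \<Sum>j\<in>A. \<Sum>k\<in>A. \<Sum>l\<in>A. F i j k l) = (\<Sum>l\<in>A. \<Sum>j\<in>A. \<Sum>k\<in>A. \<Sum>i\<in>A. F i j k l)"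
proof -
  have "(\<Sum>l\<in>A. \<Sum>j\<in>A. \<Sum>k\<in>A. \<Sum>i\<in>A. F i j k l) = (\<Sum>l\<in>A. \<Sum>i\<in>A. \<Sum>j\<in>A. \<Sum>k\<in>A. F i j k l)"
    by (rule sum.cong[OF refl], rule mv3[symmetric])
  also have "\<dots> = (\<Sum>i\<in>A. \<Sum>j\<in>A. \<Sum>k\<in>A. \<Sum>l\<in>A. F i j k l)"
    using mv4[of "\<lambda>l i j k. F i j k l" A] by simp
  finally show ?thesis by simp
qed

lemma swap15: "(\<Sum>i\<in>A. \<Sum>j\<in>A. \<Sum>k\<in>A. \<Sum>l\<in>A. \<Sum>m\<in>A. F i j k l m) =
    (\<Sum>m\<in>A. \<Sum>j\<in>A. \<Sum>k\<in>A. \<Sum>l\<in>A. \<Sum>i\<in>A. F i j k l m)"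
proof -
  have "(\<Sum>m\<in>A. \<Sum>j\<in>A. \<Sum>k\<in>A. \<Sum>l\<in>A. \<Sum>i\<in>A. F i j k l m) =
      (\<Sum>m\<in>A. \<Sum>i\<in>A. \<Sum>j\<in>A. \<Sum>k\<in>A. \<Sum>l\<in>A. F i j k l m)"
    by (rule sum.cong[OF refl], rule mv4[symmetric])
  also have "\<dots> = (\<Sum>i\<in>A. \<Sum>j\<in>A. \<Sum>k\<in>A. \<Sum>l\<in>A. \<Sum>m\<in>A. F i j k l m)"
    using mv5[of "\<lambda>m i j k l. F i j k l m" A] by simp
  finally show ?thesis by simp
qed

lemma inner1: "(\<Sum>i\<in>A. \<Sum>j\<in>A. \<Sum>k\<in>A. \<Sum>l\<in>A. \<Sum>m\<in>A. F i j k l m) =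
    (\<Sum>j\<in>A. \<Sum>k\<in>A. \<Sum>l\<in>A. \<Sum>m\<in>A. \<Sum>i\<in>A. F i j k l m)"
  by (rule mv5)
lemma inner2: "(\<Sum>i\<in>A. \<Sum>j\<in>A. \<Sum>k\<in>A. \<Sum>l\<in>A. \<Sum>m\<in>A. F i j k l m) =
    (\<Sum>i\<in>A. \<Sum>k\<in>A. \<Sum>l\<in>A. \<Sum>m\<in>A. \<Sum>j\<in>A. F i j k l m)"
  by (rule sum.cong[OF refl], rule mv4)
lemma inner3: "(\<Sum>i\<in>A. \<Sum>j\<in>A. \<Sum>k\<in>A. \<Sum>l\<in>A. \<Sum>m\<in>A. F i j k l m) =
    (\<Sum>i\<in>A. \<Sum>j\<in>A. \<Sum>l\<in>A. \<Sum>m\<in>A. \<Sum>k\<in>A. F i j k l m)"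
  by (rule sum.cong[OF refl], rule sum.cong[OF refl], rule mv3)
lemma inner4: "(\<Sum>i\<in>A. \<Sum>j\<in>A. \<Sum>k\<in>A. \<Sum>l\<in>A. \<Sum>m\<in>A. F i j k l m) =
    (\<Sum>i\<in>A. \<Sum>j\<in>A. \<Sum>k\<in>A. \<Sum>m\<in>A. \<Sum>l\<in>A. F i j k l m)"
  by (rule sum.cong[OF refl], rule sum.cong[OF refl], rule sum.cong[OF refl], rule sum.swap)

lemma prod14: "(\<Sum>x\<in>A. f x) * (\<Sum>a\<in>B. \<Sum>b\<in>B. \<Sum>c\<in>B. \<Sum>d\<in>B. h a b c d) =
   (\<Sum>x\<in>A. \<Sum>a\<in>B. \<Sum>b\<in>B. \<Sum>c\<in>B. \<Sum>d\<in>B. (f x :: real) * h a b c d)"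
  by (simp only: sum_distrib_right) (simp only: sum_distrib_left)
locale CQRL = PR U g for U :: "(real^'n::finite) set" and g +
  fixes A :: "real^'n \<Rightarrow> 'n \<Rightarrow> real"
  assumes cqr: "CQR U g A" and n3: "CARD('n) \<ge> 3"
begin

lemma As: "smooth_on U (\<lambda>y. A y p)"
  using cqr unfolding CQR_def by blast

lemma cq: "x \<in> U \<Longrightarrow> nabla4 g (weyl g) i j k l m x =
   2 * A x i * weyl g j k l m x + A x j * weyl g i k l m x + A x k * weyl g j i l m x
   + A x l * weyl g j k i m x + A x m * weyl g j k l i x"
  using cqr unfolding CQR_def by blast

lemma tr24: "y \<in> U \<Longrightarrow> (\<Sum>i\<in>UNIV. \<Sum>m\<in>UNIV. ginv g y i m * weyl g k i l m y) = 0"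
proof -
  assume y: "y \<in> U"
  have "(\<Sum>i\<in>UNIV. \<Sum>m\<in>UNIV. ginv g y i m * weyl g k i l m y) =
      - (\<Sum>i\<in>UNIV. \<Sum>m\<in>UNIV. ginv g y i m * weyl g i k l m y)"
    by (simp add: weyl_anti1[OF y, of k] sum_negf)
  also have "\<dots> = 0" using tr_weyl[OF y n3] by simp
  finally show ?thesis .
qed

lemma weyl_cyc3: "x \<in> U \<Longrightarrow> weyl g a b c m x + weyl g b c a m x + weyl g c a b m x = 0"
proof -
  assume x: "x \<in> U"
  show ?thesis
    using weyl_pair[OF x, of a b c m] weyl_pair[OF x, of b c a m] weyl_pair[OF x, of c a b m]
      weyl_anti1[OF x, of c m a b] weyl_anti1[OF x, of a m b c] weyl_anti1[OF x, of b m c a]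
      weyl_bianchi1[OF x, of m a b c] by linarith
qed

definition Al :: "real^'n \<Rightarrow> 'n \<Rightarrow> 'n \<Rightarrow> 'n \<Rightarrow> real" where
  "Al y a b c = (\<Sum>m\<in>UNIV. \<Sum>p\<in>UNIV. ginv g y m p * A y p * weyl g a b c m y)"

lemma alpha: "y \<in> U \<Longrightarrow> Al y a b c = 0"
proof -
  assume y: "y \<in> U"
  define G where "G a b = ginv g y a b" for a b
  define C where "C a b c d = weyl g a b c d y" for a b c d
  define Ay where "Ay a = A y a" for a
  have TR: "(\<Sum>i\<in>UNIV. \<Sum>m\<in>UNIV. G i m * C k i l m) = 0" for k l
    unfolding G_def C_def using tr24[OF y] .
  have E1: "Al y k j l + Al y l j k = 0" for k j l
  proof -
    have N0: "(\<Sum>i\<in>UNIV. \<Sum>m\<in>UNIV. G i m * nabla4 g (weyl g) j k i l m y) = 0"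
      unfolding G_def by (rule nabla_tr24[OF y tr24])
    have "(\<Sum>i\<in>UNIV. \<Sum>m\<in>UNIV. G i m * nabla4 g (weyl g) j k i l m y) =
        2 * Ay j * (\<Sum>i\<in>UNIV. \<Sum>m\<in>UNIV. G i m * C k i l m)
        + Ay k * (\<Sum>i\<in>UNIV. \<Sum>m\<in>UNIV. G i m * C j i l m)
        + (\<Sum>i\<in>UNIV. \<Sum>m\<in>UNIV. G i m * (Ay i * C k j l m))
        + Ay l * (\<Sum>i\<in>UNIV. \<Sum>m\<in>UNIV. G i m * C k i j m)
        + (\<Sum>i\<in>UNIV. \<Sum>m\<in>UNIV. G i m * (Ay m * C k i l j))"
      unfolding cq[OF y] C_def Ay_def
      by (simp add: sum.distrib distrib_left sum_distrib_left mult_ac)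
    then have V: "(\<Sum>i\<in>UNIV. \<Sum>m\<in>UNIV. G i m * (Ay i * C k j l m))
        + (\<Sum>i\<in>UNIV. \<Sum>m\<in>UNIV. G i m * (Ay m * C k i l j)) = 0"
      using N0 TR by simp
    have V1: "(\<Sum>i\<in>UNIV. \<Sum>m\<in>UNIV. G i m * (Ay i * C k j l m)) = Al y k j l"
    proof -
      have "(\<Sum>i\<in>UNIV. \<Sum>m\<in>UNIV. G i m * (Ay i * C k j l m)) = (\<Sum>m\<in>UNIV. \<Sum>i\<in>UNIV. G i m * (Ay i * C k j l m))"
        by (rule sum.swap)
      also have "\<dots> = (\<Sum>m\<in>UNIV. \<Sum>i\<in>UNIV. G m i * Ay i * C k j l m)"
        by (intro sum.cong refl) (simp only: G_def, subst Gsym[OF y], simp add: mult_ac)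
      finally show ?thesis unfolding Al_def G_def Ay_def C_def .
    qed
    have V2: "(\<Sum>i\<in>UNIV. \<Sum>m\<in>UNIV. G i m * (Ay m * C k i l j)) = Al y l j k"
      unfolding Al_def G_def Ay_def C_def using weyl_pair[OF y, of k _ l j] by (simp add: mult_ac)
    show ?thesis using V V1 V2 by simp
  qed
  have E2: "Al y a b c = - Al y b a c" for a b c
    unfolding Al_def by (simp add: weyl_anti1[OF y, of a b] sum_negf)
  have E3: "Al y a b c + Al y b c a + Al y c a b = 0" for a b c
  proof -
    have "Al y a b c + Al y b c a + Al y c a b =
       (\<Sum>m\<in>UNIV. \<Sum>p\<in>UNIV. ginv g y m p * A y p * (weyl g a b c m y + weyl g b c a m y + weyl g c a b m y))"
      unfolding Al_def by (simp add: sum.distrib distrib_left)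
    then show ?thesis using weyl_cyc3[OF y] by simp
  qed
  show ?thesis
    using E1[of a b c] E1[of b c a] E1[of c a b] E1[of a c b] E1[of b a c] E1[of c b a]
      E2[of a b c] E2[of b c a] E2[of c a b] E2[of a c b] E2[of b a c] E2[of c b a]
      E3[of a b c] E3[of a c b] by linarith
qed

lemma concl1: "x \<in> U \<Longrightarrow>
   (\<Sum>m\<in>UNIV. (\<Sum>p\<in>UNIV. ginv g x m p * nabla1 g A i p x) * weyl g j k l m x)
   + (\<Sum>m\<in>UNIV. \<Sum>p\<in>UNIV. ginv g x m p * A x p * A x m) * weyl g j k l i x = 0"
proof -
  assume x: "x \<in> U"
  define G where "G a b = ginv g x a b" for a b
  define C where "C a b c d = weyl g a b c d x" for a b c d
  define Ax where "Ax a = A x a" for a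
  define NA where "NA a b = nabla1 g A a b x" for a b
  have T: "\<And>y j k l. y \<in> U \<Longrightarrow> (\<Sum>m\<in>UNIV. \<Sum>p\<in>UNIV. ginv g y m p * A y p * weyl g j k l m y) = 0"
    using alpha unfolding Al_def by blast
  have Z: "(\<Sum>m\<in>UNIV. \<Sum>p\<in>UNIV. G m p * (NA i p * C j k l m + Ax p * nabla4 g (weyl g) i j k l m x)) = 0"
    unfolding G_def NA_def C_def Ax_def by (rule nabla_A[OF x As T])
  have AL: "(\<Sum>m\<in>UNIV. \<Sum>p\<in>UNIV. G m p * Ax p * C a b c m) = 0" for a b c
    using alpha[OF x, of a b c] unfolding Al_def G_def Ax_def C_def .
  have S1: "(\<Sum>m\<in>UNIV. \<Sum>p\<in>UNIV. G m p * (NA i p * C j k l m + Ax p * nabla4 g (weyl g) i j k l m x))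
     = (\<Sum>m\<in>UNIV. (\<Sum>p\<in>UNIV. G m p * NA i p) * C j k l m)
       + (2 * Ax i * (\<Sum>m\<in>UNIV. \<Sum>p\<in>UNIV. G m p * Ax p * C j k l m)
       + Ax j * (\<Sum>m\<in>UNIV. \<Sum>p\<in>UNIV. G m p * Ax p * C i k l m)
       + Ax k * (\<Sum>m\<in>UNIV. \<Sum>p\<in>UNIV. G m p * Ax p * C j i l m)
       + Ax l * (\<Sum>m\<in>UNIV. \<Sum>p\<in>UNIV. G m p * Ax p * C j k i m)
       + (\<Sum>m\<in>UNIV. \<Sum>p\<in>UNIV. G m p * Ax p * Ax m) * C j k l i)"
    unfolding cq[OF x] C_def Ax_def
    by (simp add: sum.distrib distrib_left sum_distrib_left sum_distrib_right mult_ac)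
  have "(\<Sum>m\<in>UNIV. (\<Sum>p\<in>UNIV. G m p * NA i p) * C j k l m)
       + (\<Sum>m\<in>UNIV. \<Sum>p\<in>UNIV. G m p * Ax p * Ax m) * C j k l i = 0"
    using Z S1 AL by simp
  then show ?thesis unfolding G_def NA_def C_def Ax_def .
qed

lemma concl3: "x \<in> U \<Longrightarrow>
   (\<Sum>m\<in>UNIV. \<Sum>p\<in>UNIV. ginv g x m p *
      (nabla1 g A i m x * weyl g j k l p x + nabla1 g A j m x * weyl g k i l p x
       + nabla1 g A k m x * weyl g i j l p x)) = 0"
proof -
  assume x: "x \<in> U"
  define G where "G a b = ginv g x a b" for a b
  define C where "C a b c d = weyl g a b c d x" for a b c d
  define NA where "NA a b = nabla1 g A a b x" for a b
  define A2 where "A2 = (\<Sum>m\<in>UNIV. \<Sum>p\<in>UNIV. ginv g x m p * A x p * A x m)"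
  have one: "(\<Sum>m\<in>UNIV. \<Sum>p\<in>UNIV. G m p * NA a m * C b c l p) = - A2 * C b c l a" for a b c
  proof -
    have "(\<Sum>m\<in>UNIV. \<Sum>p\<in>UNIV. G m p * NA a m * C b c l p) = (\<Sum>p\<in>UNIV. \<Sum>m\<in>UNIV. G m p * NA a m * C b c l p)"
      by (rule sum.swap)
    also have "\<dots> = (\<Sum>p\<in>UNIV. \<Sum>m\<in>UNIV. G p m * NA a m * C b c l p)"
      by (intro sum.cong refl) (simp only: G_def, subst Gsym[OF x], rule refl)
    also have "\<dots> = (\<Sum>p\<in>UNIV. (\<Sum>m\<in>UNIV. G p m * NA a m) * C b c l p)"
      by (simp add: sum_distrib_right)
    also have "\<dots> = - A2 * C b c l a"
      using concl1[OF x, of a b c l] unfolding G_def NA_def C_def A2_def by simp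
    finally show ?thesis .
  qed
  have "(\<Sum>m\<in>UNIV. \<Sum>p\<in>UNIV. G m p * (NA i m * C j k l p + NA j m * C k i l p + NA k m * C i j l p))
     = - A2 * (C j k l i + C k i l j + C i j l k)"
    using one[of i j k] one[of j k i] one[of k i j]
    by (simp add: sum.distrib distrib_left algebra_simps)
  also have "\<dots> = 0"
    using weyl_pair[OF x, of j k l i] weyl_pair[OF x, of k i l j] weyl_pair[OF x, of i j l k]
      weyl_bianchi1[OF x, of l i j k] unfolding C_def by simp
  finally show ?thesis unfolding G_def NA_def C_def .
qed

lemma concl2: "x \<in> U \<Longrightarrow>
           (\<Sum>i\<in>UNIV. \<Sum>j\<in>UNIV. \<Sum>k\<in>UNIV. \<Sum>l\<in>UNIV. \<Sum>m\<in>UNIV.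
             \<Sum>i'\<in>UNIV. \<Sum>j'\<in>UNIV. \<Sum>k'\<in>UNIV. \<Sum>l'\<in>UNIV. \<Sum>m'\<in>UNIV.
               ginv g x i i' * ginv g x j j' * ginv g x k k' * ginv g x l l' * ginv g x m m'
               * nabla4 g (weyl g) i j k l m x * nabla4 g (weyl g) i' j' k' l' m' x)
           = 8 * (\<Sum>i\<in>UNIV. \<Sum>p\<in>UNIV. ginv g x i p * A x i * A x p)
               * (\<Sum>j\<in>UNIV. \<Sum>k\<in>UNIV. \<Sum>l\<in>UNIV. \<Sum>m\<in>UNIV.
                   \<Sum>j'\<in>UNIV. \<Sum>k'\<in>UNIV. \<Sum>l'\<in>UNIV. \<Sum>m'\<in>UNIV.
                     ginv g x j j' * ginv g x k k' * ginv g x l l' * ginv g x m m'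
                     * weyl g j k l m x * weyl g j' k' l' m' x)"
proof -
  assume x: "x \<in> U"
  define G where "G a b = ginv g x a b" for a b
  define Ax where "Ax a = A x a" for a
  define Ah where "Ah a = (\<Sum>p\<in>UNIV. G a p * Ax p)" for a
  define C where "C a b c d = weyl g a b c d x" for a b c d
  define Cu where "Cu a b c d = (\<Sum>a'\<in>UNIV. \<Sum>b'\<in>UNIV. \<Sum>c'\<in>UNIV. \<Sum>d'\<in>UNIV.
      G a a' * G b b' * G c c' * G d d' * C a' b' c' d')" for a b c d
  define N where "N a b c d e = nabla4 g (weyl g) a b c d e x" for a b c d e
  define Nt where "Nt i j k l m = Ax i * C j k l m + Ax i * C j k l m + Ax j * C i k l m + Ax k * C j i l m
      + Ax l * C j k i m + Ax m * C j k l i" for i j k l m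
  define Rt where "Rt i j k l m = Ah i * Cu j k l m + Ah i * Cu j k l m + Ah j * Cu i k l m + Ah k * Cu j i l m
      + Ah l * Cu j k i m + Ah m * Cu j k l i" for i j k l m
  define Rz where "Rz i j k l m = (\<Sum>i'\<in>UNIV. \<Sum>j'\<in>UNIV. \<Sum>k'\<in>UNIV. \<Sum>l'\<in>UNIV. \<Sum>m'\<in>UNIV. G i i' * G j j' * G k k' * G l l' * G m m' * N i' j' k' l' m')" for i j k l m
  have NNt: "N i j k l m = Nt i j k l m" for i j k l m
    unfolding N_def Nt_def C_def Ax_def cq[OF x] by (simp add: algebra_simps)
  have AH4: "(\<Sum>q\<in>UNIV. Ah q * C a b c q) = 0" for a b c
  proof -
    have "(\<Sum>q\<in>UNIV. Ah q * C a b c q) = Al x a b c"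
      unfolding Ah_def Al_def G_def Ax_def C_def by (simp add: sum_distrib_left sum_distrib_right mult_ac)
    then show ?thesis using alpha[OF x] by simp
  qed
  have AH3: "(\<Sum>q\<in>UNIV. Ah q * C a b q d) = 0" for a b d
    using AH4[of a b d] unfolding C_def by (simp add: weyl_anti2[OF x, of a b _ d] sum_negf)
  have AH1: "(\<Sum>q\<in>UNIV. Ah q * C q b c d) = 0" for b c d
    using AH3[of c d b] unfolding C_def by (simp add: weyl_pair[OF x, of _ b c d])
  have AH2: "(\<Sum>q\<in>UNIV. Ah q * C a q c d) = 0" for a c d
    using AH1[of a c d] unfolding C_def by (simp add: weyl_anti1[OF x, of a] sum_negf)
  have RzRt: "Rz i j k l m = Rt i j k l m" for i j k l m
  proof -
    have e: "Rz i j k l m = (\<Sum>i'\<in>UNIV. \<Sum>j'\<in>UNIV. \<Sum>k'\<in>UNIV. \<Sum>l'\<in>UNIV. \<Sum>m'\<in>UNIV. G i i' * G j j' * G k k' * G l l' * G m m' * (Ax i' * C j' k' l' m')) + (\<Sum>i'\<in>UNIV. \<Sum>j'\<in>UNIV. \<Sum>k'\<in>UNIV. \<Sum>l'\<in>UNIV. \<Sum>m'\<in>UNIV. G i i' * G j j' * G k k' * G l l' * G m m' * (Ax i' * C j' k' l' m')) + (\<Sum>i'\<in>UNIV. \<Sum>j'\<in>UNIV. \<Sum>k'\<in>UNIV. \<Sum>l'\<in>UNIV. \<Sum>m'\<in>UNIV. G i i' * G j j' * G k k' * G l l' * G m m' * (Ax j' * C i' k' l' m')) + (\<Sum>i'\<in>UNIV.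 \<Sum>j'\<in>UNIV. \<Sum>k'\<in>UNIV. \<Sum>l'\<in>UNIV. \<Sum>m'\<in>UNIV. G i i' * G j j' * G k k' * G l l' * G m m' * (Ax k' * C j' i' l' m')) + (\<Sum>i'\<in>UNIV. \<Sum>j'\<in>UNIV. \<Sum>k'\<in>UNIV. \<Sum>l'\<in>UNIV. \<Sum>m'\<in>UNIV. G i i' * G j j' * G k k' * G l l' * G m m' * (Ax l' * C j' k' i' m')) + (\<Sum>i'\<in>UNIV. \<Sum>j'\<in>UNIV. \<Sum>k'\<in>UNIV. \<Sum>l'\<in>UNIV. \<Sum>m'\<in>UNIV. G i i' * G j j' * G k k' * G l l' * G m m' * (Ax m' * C j' k' l' i'))"
      unfolding Rz_def NNt Nt_def by (simp only: distrib_left sum.distrib)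
    have t1: "(\<Sum>i'\<in>UNIV. \<Sum>j'\<in>UNIV. \<Sum>k'\<in>UNIV. \<Sum>l'\<in>UNIV. \<Sum>m'\<in>UNIV. G i i' * G j j' * G k k' * G l l' * G m m' * (Ax i' * C j' k' l' m')) = (Ah i * Cu j k l m)"
      unfolding Ah_def Cu_def prod14 by (simp add: mult_ac)
    have t2: "(\<Sum>i'\<in>UNIV. \<Sum>j'\<in>UNIV. \<Sum>k'\<in>UNIV. \<Sum>l'\<in>UNIV. \<Sum>m'\<in>UNIV. G i i' * G j j' * G k k' * G l l' * G m m' * (Ax j' * C i' k' l' m')) = (Ah j * Cu i k l m)"
      unfolding Ah_def Cu_def prod14 by (rule trans[OF sum.swap]) (simp add: mult_ac)
    have t3: "(\<Sum>i'\<in>UNIV. \<Sum>j'\<in>UNIV. \<Sum>k'\<in>UNIV. \<Sum>l'\<in>UNIV. \<Sum>m'\<in>UNIV. G i i' * G j j' * G k k' * G l l' * G m m' * (Ax k' * C j' i' l' m')) = (Ah k * Cu j i l m)"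
      unfolding Ah_def Cu_def prod14 by (rule trans[OF sum3_rev]) (simp add: mult_ac)
    have t4: "(\<Sum>i'\<in>UNIV. \<Sum>j'\<in>UNIV. \<Sum>k'\<in>UNIV. \<Sum>l'\<in>UNIV. \<Sum>m'\<in>UNIV. G i i' * G j j' * G k k' * G l l' * G m m' * (Ax l' * C j' k' i' m')) = (Ah l * Cu j k i m)"
      unfolding Ah_def Cu_def prod14 by (rule trans[OF swap14]) (simp add: mult_ac)
    have t5: "(\<Sum>i'\<in>UNIV. \<Sum>j'\<in>UNIV. \<Sum>k'\<in>UNIV. \<Sum>l'\<in>UNIV. \<Sum>m'\<in>UNIV. G i i' * G j j' * G k k' * G l l' * G m m' * (Ax m' * C j' k' l' i')) = (Ah m * Cu j k l i)"
      unfolding Ah_def Cu_def prod14 by (rule trans[OF swap15]) (simp add: mult_ac)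
    show ?thesis unfolding e t1 t2 t3 t4 t5 Rt_def ..
  qed
  have L1: "(\<Sum>i\<in>UNIV. \<Sum>j\<in>UNIV. \<Sum>k\<in>UNIV. \<Sum>l\<in>UNIV. \<Sum>m\<in>UNIV.
             \<Sum>i'\<in>UNIV. \<Sum>j'\<in>UNIV. \<Sum>k'\<in>UNIV. \<Sum>l'\<in>UNIV. \<Sum>m'\<in>UNIV.
               ginv g x i i' * ginv g x j j' * ginv g x k k' * ginv g x l l' * ginv g x m m'
               * nabla4 g (weyl g) i j k l m x * nabla4 g (weyl g) i' j' k' l' m' x)
       = (\<Sum>i\<in>UNIV. \<Sum>j\<in>UNIV. \<Sum>k\<in>UNIV. \<Sum>l\<in>UNIV. \<Sum>m\<in>UNIV. Nt i j k l m * Rt i j k l m)"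
  proof -
    have "(\<Sum>i\<in>UNIV. \<Sum>j\<in>UNIV. \<Sum>k\<in>UNIV. \<Sum>l\<in>UNIV. \<Sum>m\<in>UNIV.
             \<Sum>i'\<in>UNIV. \<Sum>j'\<in>UNIV. \<Sum>k'\<in>UNIV. \<Sum>l'\<in>UNIV. \<Sum>m'\<in>UNIV.
               ginv g x i i' * ginv g x j j' * ginv g x k k' * ginv g x l l' * ginv g x m m'
               * nabla4 g (weyl g) i j k l m x * nabla4 g (weyl g) i' j' k' l' m' x)
       = (\<Sum>i\<in>UNIV. \<Sum>j\<in>UNIV. \<Sum>k\<in>UNIV. \<Sum>l\<in>UNIV. \<Sum>m\<in>UNIV. N i j k l m * Rz i j k l m)"
      unfolding Rz_def N_def G_def by (simp add: sum_distrib_left mult_ac)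
    then show ?thesis unfolding NNt RzRt .
  qed
  define P11 where "P11 = (\<Sum>i\<in>UNIV. \<Sum>j\<in>UNIV. \<Sum>k\<in>UNIV. \<Sum>l\<in>UNIV. \<Sum>m\<in>UNIV. (Ax i * C j k l m) * (Ah i * Cu j k l m))"
  define P12 where "P12 = (\<Sum>i\<in>UNIV. \<Sum>j\<in>UNIV. \<Sum>k\<in>UNIV. \<Sum>l\<in>UNIV. \<Sum>m\<in>UNIV. (Ax i * C j k l m) * (Ah j * Cu i k l m))"
  define P13 where "P13 = (\<Sum>i\<in>UNIV. \<Sum>j\<in>UNIV. \<Sum>k\<in>UNIV. \<Sum>l\<in>UNIV. \<Sum>m\<in>UNIV. (Ax i * C j k l m) * (Ah k * Cu j i l m))"
  define P14 where "P14 = (\<Sum>i\<in>UNIV. \<Sum>j\<in>UNIV. \<Sum>k\<in>UNIV. \<Sum>l\<in>UNIV. \<Sum>m\<in>UNIV. (Ax i * C j k l m) * (Ah l * Cu j k i m))"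
  define P15 where "P15 = (\<Sum>i\<in>UNIV. \<Sum>j\<in>UNIV. \<Sum>k\<in>UNIV. \<Sum>l\<in>UNIV. \<Sum>m\<in>UNIV. (Ax i * C j k l m) * (Ah m * Cu j k l i))"
  define P21 where "P21 = (\<Sum>i\<in>UNIV. \<Sum>j\<in>UNIV. \<Sum>k\<in>UNIV. \<Sum>l\<in>UNIV. \<Sum>m\<in>UNIV. (Ax j * C i k l m) * (Ah i * Cu j k l m))"
  define P22 where "P22 = (\<Sum>i\<in>UNIV. \<Sum>j\<in>UNIV. \<Sum>k\<in>UNIV. \<Sum>l\<in>UNIV. \<Sum>m\<in>UNIV. (Ax j * C i k l m) * (Ah j * Cu i k l m))"
  define P23 where "P23 = (\<Sum>i\<in>UNIV. \<Sum>j\<in>UNIV. \<Sum>k\<in>UNIV. \<Sum>l\<in>UNIV. \<Sum>m\<in>UNIV. (Ax j * C i k l m) * (Ah k * Cu j i l m))"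
  define P24 where "P24 = (\<Sum>i\<in>UNIV. \<Sum>j\<in>UNIV. \<Sum>k\<in>UNIV. \<Sum>l\<in>UNIV. \<Sum>m\<in>UNIV. (Ax j * C i k l m) * (Ah l * Cu j k i m))"
  define P25 where "P25 = (\<Sum>i\<in>UNIV. \<Sum>j\<in>UNIV. \<Sum>k\<in>UNIV. \<Sum>l\<in>UNIV. \<Sum>m\<in>UNIV. (Ax j * C i k l m) * (Ah m * Cu j k l i))"
  define P31 where "P31 = (\<Sum>i\<in>UNIV. \<Sum>j\<in>UNIV. \<Sum>k\<in>UNIV. \<Sum>l\<in>UNIV. \<Sum>m\<in>UNIV. (Ax k * C j i l m) * (Ah i * Cu j k l m))"
  define P32 where "P32 = (\<Sum>i\<in>UNIV. \<Sum>j\<in>UNIV. \<Sum>k\<in>UNIV. \<Sum>l\<in>UNIV. \<Sum>m\<in>UNIV. (Ax k * C j i l m) * (Ah j * Cu i k l m))"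
  define P33 where "P33 = (\<Sum>i\<in>UNIV. \<Sum>j\<in>UNIV. \<Sum>k\<in>UNIV. \<Sum>l\<in>UNIV. \<Sum>m\<in>UNIV. (Ax k * C j i l m) * (Ah k * Cu j i l m))"
  define P34 where "P34 = (\<Sum>i\<in>UNIV. \<Sum>j\<in>UNIV. \<Sum>k\<in>UNIV. \<Sum>l\<in>UNIV. \<Sum>m\<in>UNIV. (Ax k * C j i l m) * (Ah l * Cu j k i m))"
  define P35 where "P35 = (\<Sum>i\<in>UNIV. \<Sum>j\<in>UNIV. \<Sum>k\<in>UNIV. \<Sum>l\<in>UNIV. \<Sum>m\<in>UNIV. (Ax k * C j i l m) * (Ah m * Cu j k l i))"
  define P41 where "P41 = (\<Sum>i\<in>UNIV. \<Sum>j\<in>UNIV. \<Sum>k\<in>UNIV. \<Sum>l\<in>UNIV. \<Sum>m\<in>UNIV. (Ax l * C j k i m) * (Ah i * Cu j k l m))"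
  define P42 where "P42 = (\<Sum>i\<in>UNIV. \<Sum>j\<in>UNIV. \<Sum>k\<in>UNIV. \<Sum>l\<in>UNIV. \<Sum>m\<in>UNIV. (Ax l * C j k i m) * (Ah j * Cu i k l m))"
  define P43 where "P43 = (\<Sum>i\<in>UNIV. \<Sum>j\<in>UNIV. \<Sum>k\<in>UNIV. \<Sum>l\<in>UNIV. \<Sum>m\<in>UNIV. (Ax l * C j k i m) * (Ah k * Cu j i l m))"
  define P44 where "P44 = (\<Sum>i\<in>UNIV. \<Sum>j\<in>UNIV. \<Sum>k\<in>UNIV. \<Sum>l\<in>UNIV. \<Sum>m\<in>UNIV. (Ax l * C j k i m) * (Ah l * Cu j k i m))"
  define P45 where "P45 = (\<Sum>i\<in>UNIV. \<Sum>j\<in>UNIV. \<Sum>k\<in>UNIV. \<Sum>l\<in>UNIV. \<Sum>m\<in>UNIV. (Ax l * C j k i m) * (Ah m * Cu j k l i))"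
  define P51 where "P51 = (\<Sum>i\<in>UNIV. \<Sum>j\<in>UNIV. \<Sum>k\<in>UNIV. \<Sum>l\<in>UNIV. \<Sum>m\<in>UNIV. (Ax m * C j k l i) * (Ah i * Cu j k l m))"
  define P52 where "P52 = (\<Sum>i\<in>UNIV. \<Sum>j\<in>UNIV. \<Sum>k\<in>UNIV. \<Sum>l\<in>UNIV. \<Sum>m\<in>UNIV. (Ax m * C j k l i) * (Ah j * Cu i k l m))"
  define P53 where "P53 = (\<Sum>i\<in>UNIV. \<Sum>j\<in>UNIV. \<Sum>k\<in>UNIV. \<Sum>l\<in>UNIV. \<Sum>m\<in>UNIV. (Ax m * C j k l i) * (Ah k * Cu j i l m))"
  define P54 where "P54 = (\<Sum>i\<in>UNIV. \<Sum>j\<in>UNIV. \<Sum>k\<in>UNIV. \<Sum>l\<in>UNIV. \<Sum>m\<in>UNIV. (Ax m * C j k l i) * (Ah l * Cu j k i m))"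
  define P55 where "P55 = (\<Sum>i\<in>UNIV. \<Sum>j\<in>UNIV. \<Sum>k\<in>UNIV. \<Sum>l\<in>UNIV. \<Sum>m\<in>UNIV. (Ax m * C j k l i) * (Ah m * Cu j k l i))"
  have D1: "P11 = (\<Sum>i\<in>UNIV. Ax i * Ah i) * (\<Sum>j\<in>UNIV. \<Sum>k\<in>UNIV. \<Sum>l\<in>UNIV. \<Sum>m\<in>UNIV. C j k l m * Cu j k l m)"
    unfolding P11_def prod14 by (simp add: mult_ac)
  have D2: "P22 = (\<Sum>j\<in>UNIV. Ax j * Ah j) * (\<Sum>i\<in>UNIV. \<Sum>k\<in>UNIV. \<Sum>l\<in>UNIV. \<Sum>m\<in>UNIV. C i k l m * Cu i k l m)"
    unfolding P22_def prod14 by (rule trans[OF sum.swap]) (simp add: mult_ac)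
  have D3: "P33 = (\<Sum>k\<in>UNIV. Ax k * Ah k) * (\<Sum>j\<in>UNIV. \<Sum>i\<in>UNIV. \<Sum>l\<in>UNIV. \<Sum>m\<in>UNIV. C j i l m * Cu j i l m)"
    unfolding P33_def prod14 by (rule trans[OF sum3_rev]) (simp add: mult_ac)
  have D4: "P44 = (\<Sum>l\<in>UNIV. Ax l * Ah l) * (\<Sum>j\<in>UNIV. \<Sum>k\<in>UNIV. \<Sum>i\<in>UNIV. \<Sum>m\<in>UNIV. C j k i m * Cu j k i m)"
    unfolding P44_def prod14 by (rule trans[OF swap14]) (simp add: mult_ac)
  have D5: "P55 = (\<Sum>m\<in>UNIV. Ax m * Ah m) * (\<Sum>j\<in>UNIV. \<Sum>k\<in>UNIV. \<Sum>l\<in>UNIV. \<Sum>i\<in>UNIV. C j k l i * Cu j k l i)"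
    unfolding P55_def prod14 by (rule trans[OF swap15]) (simp add: mult_ac)
  have O12: "P12 = 0"
  proof -
    have "(\<Sum>j\<in>UNIV. (Ax i * C j k l m) * (Ah j * Cu i k l m)) = (Ax i * Cu i k l m) * (\<Sum>j\<in>UNIV. Ah j * C j k l m)" for i k l m
      by (simp add: sum_distrib_left mult_ac)
    then have inz: "(\<Sum>j\<in>UNIV. (Ax i * C j k l m) * (Ah j * Cu i k l m)) = 0" for i k l m using AH1 by simp
    show ?thesis unfolding P12_def by (rule trans[OF inner2]) (simp add: inz)
  qed
  have O13: "P13 = 0"
  proof -
    have "(\<Sum>k\<in>UNIV. (Ax i * C j k l m) * (Ah k * Cu j i l m)) = (Ax i * Cu j i l m) * (\<Sum>k\<in>UNIV. Ah k * C j k l m)" for i j l m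
      by (simp add: sum_distrib_left mult_ac)
    then have inz: "(\<Sum>k\<in>UNIV. (Ax i * C j k l m) * (Ah k * Cu j i l m)) = 0" for i j l m using AH2 by simp
    show ?thesis unfolding P13_def by (rule trans[OF inner3]) (simp add: inz)
  qed
  have O14: "P14 = 0"
  proof -
    have "(\<Sum>l\<in>UNIV. (Ax i * C j k l m) * (Ah l * Cu j k i m)) = (Ax i * Cu j k i m) * (\<Sum>l\<in>UNIV. Ah l * C j k l m)" for i j k m
      by (simp add: sum_distrib_left mult_ac)
    then have inz: "(\<Sum>l\<in>UNIV. (Ax i * C j k l m) * (Ah l * Cu j k i m)) = 0" for i j k m using AH3 by simp
    show ?thesis unfolding P14_def by (rule trans[OF inner4]) (simp add: inz)
  qed
  have O15: "P15 = 0"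
  proof -
    have "(\<Sum>m\<in>UNIV. (Ax i * C j k l m) * (Ah m * Cu j k l i)) = (Ax i * Cu j k l i) * (\<Sum>m\<in>UNIV. Ah m * C j k l m)" for i j k l
      by (simp add: sum_distrib_left mult_ac)
    then have inz: "(\<Sum>m\<in>UNIV. (Ax i * C j k l m) * (Ah m * Cu j k l i)) = 0" for i j k l using AH4 by simp
    show ?thesis unfolding P15_def by (simp add: inz)
  qed
  have O21: "P21 = 0"
  proof -
    have "(\<Sum>i\<in>UNIV. (Ax j * C i k l m) * (Ah i * Cu j k l m)) = (Ax j * Cu j k l m) * (\<Sum>i\<in>UNIV. Ah i * C i k l m)" for j k l m
      by (simp add: sum_distrib_left mult_ac)
    then have inz: "(\<Sum>i\<in>UNIV. (Ax j * C i k l m) * (Ah i * Cu j k l m)) = 0" for j k l m using AH1 by simp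
    show ?thesis unfolding P21_def by (rule trans[OF inner1]) (simp add: inz)
  qed
  have O23: "P23 = 0"
  proof -
    have "(\<Sum>k\<in>UNIV. (Ax j * C i k l m) * (Ah k * Cu j i l m)) = (Ax j * Cu j i l m) * (\<Sum>k\<in>UNIV. Ah k * C i k l m)" for i j l m
      by (simp add: sum_distrib_left mult_ac)
    then have inz: "(\<Sum>k\<in>UNIV. (Ax j * C i k l m) * (Ah k * Cu j i l m)) = 0" for i j l m using AH2 by simp
    show ?thesis unfolding P23_def by (rule trans[OF inner3]) (simp add: inz)
  qed
  have O24: "P24 = 0"
  proof -
    have "(\<Sum>l\<in>UNIV. (Ax j * C i k l m) * (Ah l * Cu j k i m)) = (Ax j * Cu j k i m) * (\<Sum>l\<in>UNIV. Ah l * C i k l m)" for i j k m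
      by (simp add: sum_distrib_left mult_ac)
    then have inz: "(\<Sum>l\<in>UNIV. (Ax j * C i k l m) * (Ah l * Cu j k i m)) = 0" for i j k m using AH3 by simp
    show ?thesis unfolding P24_def by (rule trans[OF inner4]) (simp add: inz)
  qed
  have O25: "P25 = 0"
  proof -
    have "(\<Sum>m\<in>UNIV. (Ax j * C i k l m) * (Ah m * Cu j k l i)) = (Ax j * Cu j k l i) * (\<Sum>m\<in>UNIV. Ah m * C i k l m)" for i j k l
      by (simp add: sum_distrib_left mult_ac)
    then have inz: "(\<Sum>m\<in>UNIV. (Ax j * C i k l m) * (Ah m * Cu j k l i)) = 0" for i j k l using AH4 by simp
    show ?thesis unfolding P25_def by (simp add: inz)
  qed
  have O31: "P31 = 0"
  proof -
    have "(\<Sum>i\<in>UNIV. (Ax k * C j i l m) * (Ah i * Cu j k l m)) = (Ax k * Cu j k l m) * (\<Sum>i\<in>UNIV. Ah i * C j i l m)" for j k l m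
      by (simp add: sum_distrib_left mult_ac)
    then have inz: "(\<Sum>i\<in>UNIV. (Ax k * C j i l m) * (Ah i * Cu j k l m)) = 0" for j k l m using AH2 by simp
    show ?thesis unfolding P31_def by (rule trans[OF inner1]) (simp add: inz)
  qed
  have O32: "P32 = 0"
  proof -
    have "(\<Sum>j\<in>UNIV. (Ax k * C j i l m) * (Ah j * Cu i k l m)) = (Ax k * Cu i k l m) * (\<Sum>j\<in>UNIV. Ah j * C j i l m)" for i k l m
      by (simp add: sum_distrib_left mult_ac)
    then have inz: "(\<Sum>j\<in>UNIV. (Ax k * C j i l m) * (Ah j * Cu i k l m)) = 0" for i k l m using AH1 by simp
    show ?thesis unfolding P32_def by (rule trans[OF inner2]) (simp add: inz)
  qed
  have O34: "P34 = 0"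
  proof -
    have "(\<Sum>l\<in>UNIV. (Ax k * C j i l m) * (Ah l * Cu j k i m)) = (Ax k * Cu j k i m) * (\<Sum>l\<in>UNIV. Ah l * C j i l m)" for i j k m
      by (simp add: sum_distrib_left mult_ac)
    then have inz: "(\<Sum>l\<in>UNIV. (Ax k * C j i l m) * (Ah l * Cu j k i m)) = 0" for i j k m using AH3 by simp
    show ?thesis unfolding P34_def by (rule trans[OF inner4]) (simp add: inz)
  qed
  have O35: "P35 = 0"
  proof -
    have "(\<Sum>m\<in>UNIV. (Ax k * C j i l m) * (Ah m * Cu j k l i)) = (Ax k * Cu j k l i) * (\<Sum>m\<in>UNIV. Ah m * C j i l m)" for i j k l
      by (simp add: sum_distrib_left mult_ac)
    then have inz: "(\<Sum>m\<in>UNIV. (Ax k * C j i l m) * (Ah m * Cu j k l i)) = 0" for i j k l using AH4 by simp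
    show ?thesis unfolding P35_def by (simp add: inz)
  qed
  have O41: "P41 = 0"
  proof -
    have "(\<Sum>i\<in>UNIV. (Ax l * C j k i m) * (Ah i * Cu j k l m)) = (Ax l * Cu j k l m) * (\<Sum>i\<in>UNIV. Ah i * C j k i m)" for j k l m
      by (simp add: sum_distrib_left mult_ac)
    then have inz: "(\<Sum>i\<in>UNIV. (Ax l * C j k i m) * (Ah i * Cu j k l m)) = 0" for j k l m using AH3 by simp
    show ?thesis unfolding P41_def by (rule trans[OF inner1]) (simp add: inz)
  qed
  have O42: "P42 = 0"
  proof -
    have "(\<Sum>j\<in>UNIV. (Ax l * C j k i m) * (Ah j * Cu i k l m)) = (Ax l * Cu i k l m) * (\<Sum>j\<in>UNIV. Ah j * C j k i m)" for i k l m
      by (simp add: sum_distrib_left mult_ac)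
    then have inz: "(\<Sum>j\<in>UNIV. (Ax l * C j k i m) * (Ah j * Cu i k l m)) = 0" for i k l m using AH1 by simp
    show ?thesis unfolding P42_def by (rule trans[OF inner2]) (simp add: inz)
  qed
  have O43: "P43 = 0"
  proof -
    have "(\<Sum>k\<in>UNIV. (Ax l * C j k i m) * (Ah k * Cu j i l m)) = (Ax l * Cu j i l m) * (\<Sum>k\<in>UNIV. Ah k * C j k i m)" for i j l m
      by (simp add: sum_distrib_left mult_ac)
    then have inz: "(\<Sum>k\<in>UNIV. (Ax l * C j k i m) * (Ah k * Cu j i l m)) = 0" for i j l m using AH2 by simp
    show ?thesis unfolding P43_def by (rule trans[OF inner3]) (simp add: inz)
  qed
  have O45: "P45 = 0"
  proof -
    have "(\<Sum>m\<in>UNIV. (Ax l * C j k i m) * (Ah m * Cu j k l i)) = (Ax l * Cu j k l i) * (\<Sum>m\<in>UNIV. Ah m * C j k i m)" for i j k l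
      by (simp add: sum_distrib_left mult_ac)
    then have inz: "(\<Sum>m\<in>UNIV. (Ax l * C j k i m) * (Ah m * Cu j k l i)) = 0" for i j k l using AH4 by simp
    show ?thesis unfolding P45_def by (simp add: inz)
  qed
  have O51: "P51 = 0"
  proof -
    have "(\<Sum>i\<in>UNIV. (Ax m * C j k l i) * (Ah i * Cu j k l m)) = (Ax m * Cu j k l m) * (\<Sum>i\<in>UNIV. Ah i * C j k l i)" for j k l m
      by (simp add: sum_distrib_left mult_ac)
    then have inz: "(\<Sum>i\<in>UNIV. (Ax m * C j k l i) * (Ah i * Cu j k l m)) = 0" for j k l m using AH4 by simp
    show ?thesis unfolding P51_def by (rule trans[OF inner1]) (simp add: inz)
  qed
  have O52: "P52 = 0"
  proof -
    have "(\<Sum>j\<in>UNIV. (Ax m * C j k l i) * (Ah j * Cu i k l m)) = (Ax m * Cu i k l m) * (\<Sum>j\<in>UNIV. Ah j * C j k l i)" for i k l m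
      by (simp add: sum_distrib_left mult_ac)
    then have inz: "(\<Sum>j\<in>UNIV. (Ax m * C j k l i) * (Ah j * Cu i k l m)) = 0" for i k l m using AH1 by simp
    show ?thesis unfolding P52_def by (rule trans[OF inner2]) (simp add: inz)
  qed
  have O53: "P53 = 0"
  proof -
    have "(\<Sum>k\<in>UNIV. (Ax m * C j k l i) * (Ah k * Cu j i l m)) = (Ax m * Cu j i l m) * (\<Sum>k\<in>UNIV. Ah k * C j k l i)" for i j l m
      by (simp add: sum_distrib_left mult_ac)
    then have inz: "(\<Sum>k\<in>UNIV. (Ax m * C j k l i) * (Ah k * Cu j i l m)) = 0" for i j l m using AH2 by simp
    show ?thesis unfolding P53_def by (rule trans[OF inner3]) (simp add: inz)
  qed
  have O54: "P54 = 0"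
  proof -
    have "(\<Sum>l\<in>UNIV. (Ax m * C j k l i) * (Ah l * Cu j k i m)) = (Ax m * Cu j k i m) * (\<Sum>l\<in>UNIV. Ah l * C j k l i)" for i j k m
      by (simp add: sum_distrib_left mult_ac)
    then have inz: "(\<Sum>l\<in>UNIV. (Ax m * C j k l i) * (Ah l * Cu j k i m)) = 0" for i j k m using AH3 by simp
    show ?thesis unfolding P54_def by (rule trans[OF inner4]) (simp add: inz)
  qed
  have EXP: "(\<Sum>i\<in>UNIV. \<Sum>j\<in>UNIV. \<Sum>k\<in>UNIV. \<Sum>l\<in>UNIV. \<Sum>m\<in>UNIV. (Nt i j k l m * Rt i j k l m)) = P11 + P11 + P12 + P13 + P14 + P15 + P11 + P11 + P12 + P13 + P14 + P15 + P21 + P21 + P22 + P23 + P24 + P25 + P31 + P31 + P32 + P33 + P34 + P35 + P41 + P41 + P42 + P43 + P44 + P45 + P51 + P51 + P52 + P53 + P54 + P55"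
    unfolding Nt_def Rt_def P11_def P12_def P13_def P14_def P15_def P21_def P22_def P23_def P24_def P25_def P31_def P32_def P33_def P34_def P35_def P41_def P42_def P43_def P44_def P45_def P51_def P52_def P53_def P54_def P55_def
    by (simp only: distrib_left distrib_right sum.distrib add.assoc)
  have A2: "(\<Sum>i\<in>UNIV. \<Sum>p\<in>UNIV. ginv g x i p * A x i * A x p) = (\<Sum>i\<in>UNIV. Ax i * Ah i)"
    unfolding Ah_def G_def Ax_def by (simp add: sum_distrib_left mult_ac)
  have C2: "(\<Sum>j\<in>UNIV. \<Sum>k\<in>UNIV. \<Sum>l\<in>UNIV. \<Sum>m\<in>UNIV.
                   \<Sum>j'\<in>UNIV. \<Sum>k'\<in>UNIV. \<Sum>l'\<in>UNIV. \<Sum>m'\<in>UNIV.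
                     ginv g x j j' * ginv g x k k' * ginv g x l l' * ginv g x m m'
                     * weyl g j k l m x * weyl g j' k' l' m' x)
     = (\<Sum>j\<in>UNIV. \<Sum>k\<in>UNIV. \<Sum>l\<in>UNIV. \<Sum>m\<in>UNIV. C j k l m * Cu j k l m)"
    unfolding Cu_def G_def C_def by (simp add: sum_distrib_left mult_ac)
  show ?thesis unfolding L1 EXP A2 C2
    using D1 D2 D3 D4 D5 O12 O13 O14 O15 O21 O23 O24 O25 O31 O32 O34 O35 O41 O42 O43 O45 O51 O52 O53 O54
    by simp
qed

end

theorem mainTheorem2:
  fixes U :: "(real^'n::finite) set" and g :: "'n metric" and A :: "real^'n \<Rightarrow> 'n \<Rightarrow> real"
  assumes "CARD('n) \<ge> 3"
    and "open U" and "connected U"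
    and "pseudo_riemannian U g"
    and "CQR U g A"
  shows "(\<forall>x\<in>U. \<forall>i j k l.
           (\<Sum>m\<in>UNIV. (\<Sum>p\<in>UNIV. ginv g x m p * nabla1 g A i p x) * weyl g j k l m x)
           + (\<Sum>m\<in>UNIV. \<Sum>p\<in>UNIV. ginv g x m p * A x p * A x m) * weyl g j k l i x = 0) \<and>
         (\<forall>x\<in>U.
           (\<Sum>i\<in>UNIV. \<Sum>j\<in>UNIV. \<Sum>k\<in>UNIV. \<Sum>l\<in>UNIV. \<Sum>m\<in>UNIV.
             \<Sum>i'\<in>UNIV. \<Sum>j'\<in>UNIV. \<Sum>k'\<in>UNIV. \<Sum>l'\<in>UNIV. \<Sum>m'\<in>UNIV.
               ginv g x i i' * ginv g x j j' * ginv g x k k' * ginv g x l l' * ginv g x m m'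
               * nabla4 g (weyl g) i j k l m x * nabla4 g (weyl g) i' j' k' l' m' x)
           = 8 * (\<Sum>i\<in>UNIV. \<Sum>p\<in>UNIV. ginv g x i p * A x i * A x p)
               * (\<Sum>j\<in>UNIV. \<Sum>k\<in>UNIV. \<Sum>l\<in>UNIV. \<Sum>m\<in>UNIV.
                   \<Sum>j'\<in>UNIV. \<Sum>k'\<in>UNIV. \<Sum>l'\<in>UNIV. \<Sum>m'\<in>UNIV.
                     ginv g x j j' * ginv g x k k' * ginv g x l l' * ginv g x m m'
                     * weyl g j k l m x * weyl g j' k' l' m' x)) \<and>
         (\<forall>x\<in>U. \<forall>i j k l.
           (\<Sum>m\<in>UNIV. \<Sum>p\<in>UNIV. ginv g x m p *
              (nabla1 g A i m x * weyl g j k l p x + nabla1 g A j m x * weyl g k i l p x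
               + nabla1 g A k m x * weyl g i j l p x)) = 0)"
proof -
  interpret CQRL U g A
    by (unfold_locales) (use assms in auto)
  show ?thesis
    using concl1 concl2 concl3 by blast
qed

end
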